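(* Consider the sequences generated by Algorithm 2 (described in the context), the index set $K$ and indices $(i_k)$ defined in the context, $\sigma:=\frac{2\hat\theta}{\eta L}\in[0,1)$, and let $d_0$ be the distance from $x_0$ to the (nonempty) solution set $(F+N_C)^{-1}(0)$. For $k\in K$ define the ergodic quantities $$y_k^a=\frac{1}{\Lambda_k}\sum_{\ell=1}^k\lambda_{i_\ell}y_{i_\ell},\quad v_k^a=\frac{1}{\Lambda_k}\sum_{\ell=1}^k\lambda_{i_\ell}(F(y_{i_\ell})+\nu_{i_\ell}),\quad \varepsilon_k^a=\frac{1}{\Lambda_k}\sum_{\ell=1}^k\lambda_{i_\ell}\langle y_{i_\ell}-y_k^a,F(y_{i_\ell})+\nu_{i_\ell}-v_k^a\rangle,$$ where $\Lambda_k=\sum_{\ell=1}^k\lambda_{i_\ell}$. Then for all $k\in K$: (a) there exists $1\le j\le k$ such that $\nu_{i_j}\in N_C(y_{i_j})$ and $\|F(y_{i_j})+\nu_{i_j}\|\le\dfrac{d_0^2}{\tau\eta(1-\sigma)k}$; (b) $v_k^a\in(F+N_C)^{\varepsilon_k^a}(y_k^a)$ and $$\|v_k^a\|\le\frac{2d_0^2}{\tau^{3/2}\eta\sqrt{1-\sigma^2}\,k^{3/2}},\qquad \varepsilon_k^a\le\frac{2d_0^3}{\tau^{3/2}\eta(1-\sigma^2)k^{3/2}}.$$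
   Context: Setting: $\mathcal H$ real Hilbert space; $C\subseteq\mathcal H$ nonempty closed convex; $N_C(x)=\{\nu:\langle\nu,y-x\rangle\le0\ \forall y\in C\}$ if $x\in C$, $N_C(x)=\emptyset$ otherwise. $F:C\to\mathcal H$ is monotone, continuously differentiable, and $\|F'(x)-F'(y)\|\le L\|x-y\|$ for all $x,y\in C$, with $L>0$; the set $(F+N_C)^{-1}(0)$ of $x$ with $0\in F(x)+N_C(x)$ is nonempty. For $y\in C$, $F_y(x):=F(y)+F'(y)(x-y)$. For a set-valued $T$ and $\varepsilon\ge0$, $T^\varepsilon(x)=\{v\in\mathcal H:\langle v-u,x-z\rangle\ge-\varepsilon\ \forall z,\ \forall u\in T(z)\}$. Parameters: $0\le\hat\sigma<1/2$; $0<\theta<(1-\hat\sigma)(1-2\hat\sigma)$; $\hat\theta:=\theta\big(\frac{\hat\sigma}{1-\hat\sigma}+\frac{\theta}{(1-\hat\sigma)^2}\big)$; $\eta>2\hat\theta/L$; $\tau:=\dfrac{2(\theta-\hat\theta)}{2\theta+\frac{\eta L}{2}+\sqrt{(2\theta+\frac{\eta L}{2})^2-4\theta(\theta-\hat\theta)}}$ (one has $0<\tau<1$). Algorithm 2: input $x_0\in C$, $y_0:=x_0$, $\nu_0:=0$, $\lambda_1>0$ with $\lambda_1^2\|F(y_0)\|\le2\theta/L$. For $k=1,2,\dots$: if $F(y_{k-1})+\nu_{k-1}=0$, stop and return $y_{k-1}$. If $\frac{\lambda_kL}{2}\|\lambda_k(F(y_{k-1})+\nu_{k-1})+y_{k-1}-x_{k-1}\|\le\hat\theta$,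 set $y_k=y_{k-1}$, $\nu_k=\nu_{k-1}$; otherwise find any $(y_k,\nu_k)$ with $\nu_k\in N_C(y_k)$ and $\|\lambda_k(F_{y_{k-1}}(y_k)+\nu_k)+y_k-x_{k-1}\|\le\hat\sigma\|y_k-y_{k-1}\|$. Then, if $\lambda_k\|y_k-x_{k-1}\|\ge\eta$, set $x_k=x_{k-1}-\tau\lambda_k(F(y_k)+\nu_k)$ and $\lambda_{k+1}=(1-\tau)\lambda_k$; else set $x_k=x_{k-1}$ and $\lambda_{k+1}=\lambda_k/(1-\tau)$. Standing assumption: the algorithm never stops at the first test, i.e. $F(y_{k-1})+\nu_{k-1}\neq0$ for all $k$. Index sets: $A=\{k\ge1:\lambda_k\|y_k-x_{k-1}\|\ge\eta\}$; $K=\{k\ge1:k\le\#A\}$; $i_0=0$ and $i_k$ is the $k$-th element of $A$ in increasing order. *)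

theory Defs
  imports "HOL-Analysis.Analysis" "HOL-Library.Infinite_Set"
begin

definition normal_cone :: "'a::real_inner set \<Rightarrow> 'a \<Rightarrow> 'a set" where
  "normal_cone C x = (if x \<in> C then {v. \<forall>y\<in>C. inner v (y - x) \<le> 0} else {})"

definition linearization :: "('a::real_normed_vector \<Rightarrow> 'a) \<Rightarrow> ('a \<Rightarrow> 'a \<Rightarrow>\<^sub>L 'a) \<Rightarrow> 'a \<Rightarrow> 'a \<Rightarrow> 'a" where
  "linearization F F' y x = F y + blinfun_apply (F' y) (x - y)"

definition FN :: "('a::real_inner \<Rightarrow> 'a) \<Rightarrow> 'a set \<Rightarrow> 'a \<Rightarrow> 'a set" where
  "FN F C z = {F z + \<nu> | \<nu>. \<nu> \<in> normal_cone C z}"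

definition enlargement :: "('a::real_inner \<Rightarrow> 'a set) \<Rightarrow> real \<Rightarrow> 'a \<Rightarrow> 'a set" where
  "enlargement T \<epsilon> x = {v. \<forall>z. \<forall>u\<in>T z. inner (v - u) (x - z) \<ge> - \<epsilon>}"

definition solution_set :: "('a::real_inner \<Rightarrow> 'a) \<Rightarrow> 'a set \<Rightarrow> 'a set" where
  "solution_set F C = {x. 0 \<in> FN F C x}"

definition thetahat :: "real \<Rightarrow> real \<Rightarrow> real" where
  "thetahat \<theta> \<sigma>h = \<theta> * (\<sigma>h / (1 - \<sigma>h) + \<theta> / (1 - \<sigma>h)\<^sup>2)"

definition tau :: "real \<Rightarrow> real \<Rightarrow> real \<Rightarrow> real \<Rightarrow> real" where
  "tau \<theta> \<sigma>h \<eta> L = (let th = thetahat \<theta> \<sigma>h in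
     2 * (\<theta> - th) / (2 * \<theta> + \<eta> * L / 2 + sqrt ((2 * \<theta> + \<eta> * L / 2)\<^sup>2 - 4 * \<theta> * (\<theta> - th))))"

text \<open>Sequences (x_k, y_k, nu_k, lambda_k) generated by Algorithm 2 (never stopping).
  lam 0 is unused; lam k for k \<ge> 1 is lambda_k.\<close>
definition alg2 ::
  "('a::real_inner \<Rightarrow> 'a) \<Rightarrow> ('a \<Rightarrow> 'a \<Rightarrow>\<^sub>L 'a) \<Rightarrow> 'a set \<Rightarrow> real \<Rightarrow> real \<Rightarrow> real \<Rightarrow> real \<Rightarrow>
   (nat \<Rightarrow> 'a) \<Rightarrow> (nat \<Rightarrow> 'a) \<Rightarrow> (nat \<Rightarrow> 'a) \<Rightarrow> (nat \<Rightarrow> real) \<Rightarrow> bool" where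
  "alg2 F F' C L \<sigma>h \<theta> \<eta> x y \<nu> lam \<longleftrightarrow>
     x 0 \<in> C \<and> y 0 = x 0 \<and> \<nu> 0 = 0 \<and>
     lam 1 > 0 \<and> (lam 1)\<^sup>2 * norm (F (y 0)) \<le> 2 * \<theta> / L \<and>
     (\<forall>k\<ge>1. F (y (k - 1)) + \<nu> (k - 1) \<noteq> 0) \<and>
     (\<forall>k\<ge>1.
        (if lam k * L / 2 * norm (lam k *\<^sub>R (F (y (k - 1)) + \<nu> (k - 1)) + y (k - 1) - x (k - 1))
              \<le> thetahat \<theta> \<sigma>h
         then y k = y (k - 1) \<and> \<nu> k = \<nu> (k - 1)
         else \<nu> k \<in> normal_cone C (y k) \<and>
              norm (lam k *\<^sub>R (linearization F F' (y (k - 1)) (y k) + \<nu> k) + y k - x (k - 1))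
                \<le> \<sigma>h * norm (y k - y (k - 1))) \<and>
        (if lam k * norm (y k - x (k - 1)) \<ge> \<eta>
         then x k = x (k - 1) - (tau \<theta> \<sigma>h \<eta> L * lam k) *\<^sub>R (F (y k) + \<nu> k) \<and>
              lam (k + 1) = (1 - tau \<theta> \<sigma>h \<eta> L) * lam k
         else x k = x (k - 1) \<and> lam (k + 1) = lam k / (1 - tau \<theta> \<sigma>h \<eta> L)))"

definition idxA :: "(nat \<Rightarrow> 'a::real_normed_vector) \<Rightarrow> (nat \<Rightarrow> 'a) \<Rightarrow> (nat \<Rightarrow> real) \<Rightarrow> real \<Rightarrow> nat set" where
  "idxA x y lam \<eta> = {k. k \<ge> 1 \<and> lam k * norm (y k - x (k - 1)) \<ge> \<eta>}"

definition idxK :: "nat set \<Rightarrow> nat set" where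
  "idxK A = {k. k \<ge> 1 \<and> (infinite A \<or> k \<le> card A)}"

definition idx_i :: "nat set \<Rightarrow> nat \<Rightarrow> nat" where
  "idx_i A l = (if l = 0 then 0 else enumerate A (l - 1))"

definition erg_Lambda :: "(nat \<Rightarrow> real) \<Rightarrow> (nat \<Rightarrow> nat) \<Rightarrow> nat \<Rightarrow> real" where
  "erg_Lambda lam i k = (\<Sum>l=1..k. lam (i l))"

definition erg_avg :: "(nat \<Rightarrow> real) \<Rightarrow> (nat \<Rightarrow> nat) \<Rightarrow> (nat \<Rightarrow> 'a::real_vector) \<Rightarrow> nat \<Rightarrow> 'a" where
  "erg_avg lam i z k = (1 / erg_Lambda lam i k) *\<^sub>R (\<Sum>l=1..k. lam (i l) *\<^sub>R z (i l))"

definition erg_eps :: "(nat \<Rightarrow> real) \<Rightarrow> (nat \<Rightarrow> nat) \<Rightarrow> (nat \<Rightarrow> 'a::real_inner) \<Rightarrow> (nat \<Rightarrow> 'a) \<Rightarrow> nat \<Rightarrow> real" where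
  "erg_eps lam i y g k = (1 / erg_Lambda lam i k) *
     (\<Sum>l=1..k. lam (i l) * inner (y (i l) - erg_avg lam i y k) (g (i l) - erg_avg lam i g k))"

end

theory Submission
  imports Defs
begin

lemma taylor_bound:
  fixes F :: "'a::real_inner \<Rightarrow> 'a" and F' :: "'a \<Rightarrow> 'a \<Rightarrow>\<^sub>L 'a"
  assumes cvx: "convex C"
    and der: "\<forall>u\<in>C. (F has_derivative blinfun_apply (F' u)) (at u within C)"
    and lip: "\<forall>u\<in>C. \<forall>w\<in>C. norm (F' u - F' w) \<le> L * norm (u - w)"
    and yC: "y \<in> C" and zC: "z \<in> C" and L0: "L \<ge> 0"
  shows "norm (F z - F y - blinfun_apply (F' y) (z - y)) \<le> L / 2 * (norm (z - y))\<^sup>2"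
proof -
  define d where "d = z - y"
  define w where "w = F z - F y - blinfun_apply (F' y) d"
  define p where "p t = y + t *\<^sub>R d" for t :: real
  have pC: "p t \<in> C" if "t \<in> {0..1}" for t
  proof -
    have "p t = (1 - t) *\<^sub>R y + t *\<^sub>R z" by (simp add: p_def d_def algebra_simps)
    thus ?thesis using that cvx yC zC by (auto intro: convexD)
  qed
  define \<phi> where "\<phi> t = inner (F (p t) - F y - t *\<^sub>R blinfun_apply (F' y) d) w - L/2 * t\<^sup>2 * (norm d)\<^sup>2 * norm w" for t
  define \<phi>' where "\<phi>' t s = inner (blinfun_apply (F' (p t)) (s *\<^sub>R d) - s *\<^sub>R blinfun_apply (F' y) d) w - L * t * s * (norm d)\<^sup>2 * norm w" for t s :: real
  have pd: "(p has_derivative (\<lambda>s. s *\<^sub>R d)) (at t within {0..1})" for t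
    unfolding p_def by (auto intro!: derivative_eq_intros)
  have Fp: "((\<lambda>t. F (p t)) has_derivative (\<lambda>s. blinfun_apply (F' (p t)) (s *\<^sub>R d))) (at t within {0..1})"
    if "t \<in> {0..1}" for t
    using has_derivative_in_compose2[of C F "\<lambda>u. blinfun_apply (F' u)" p "{0..1}" t "\<lambda>s. s *\<^sub>R d"] der pC that pd
    by (auto simp: image_subset_iff)
  have dphi: "(\<phi> has_derivative \<phi>' t) (at t within {0..1})" if "0 \<le> t" "t \<le> 1" for t
    unfolding \<phi>_def \<phi>'_def using that
    by (auto intro!: derivative_eq_intros Fp simp: power2_eq_square algebra_simps inner_diff_left)
  obtain \<xi> where \<xi>: "\<xi> \<in> {0..1}" "\<phi> 1 - \<phi> 0 = \<phi>' \<xi> (1 - 0)"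
    using mvt_very_simple[of 0 1 \<phi> \<phi>'] dphi by auto
  have "\<phi>' \<xi> 1 = inner (blinfun_apply (F' (p \<xi>) - F' y) d) w - L * \<xi> * (norm d)\<^sup>2 * norm w"
    by (simp add: \<phi>'_def blinfun.diff_left)
  also have "\<dots> \<le> norm (F' (p \<xi>) - F' y) * norm d * norm w - L * \<xi> * (norm d)\<^sup>2 * norm w"
  proof -
    have "inner (blinfun_apply (F' (p \<xi>) - F' y) d) w \<le> norm (blinfun_apply (F' (p \<xi>) - F' y) d) * norm w"
      by (rule norm_cauchy_schwarz)
    also have "\<dots> \<le> norm (F' (p \<xi>) - F' y) * norm d * norm w"
      by (intro mult_right_mono norm_blinfun) auto
    finally show ?thesis by simp
  qed
  also have "\<dots> \<le> (L * norm (p \<xi> - y)) * norm d * norm w - L * \<xi> * (norm d)\<^sup>2 * norm w"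
    using lip pC[OF \<xi>(1)] yC by (intro diff_right_mono mult_right_mono) auto
  also have "\<dots> = 0" using \<xi>(1) by (simp add: p_def power2_eq_square)
  finally have "\<phi> 1 \<le> \<phi> 0" using \<xi> by simp
  hence "inner w w \<le> L/2 * (norm d)\<^sup>2 * norm w"
    by (simp add: \<phi>_def p_def w_def d_def algebra_simps)
  hence "norm w * norm w \<le> (L/2 * (norm d)\<^sup>2) * norm w"
    by (simp add: power2_norm_eq_inner[symmetric] power2_eq_square algebra_simps)
  hence "norm w \<le> L/2 * (norm d)\<^sup>2"
    by (cases "norm w = 0") (auto simp: mult_le_cancel_right L0)
  thus ?thesis by (simp add: w_def d_def)
qed

lemma real_small_t:
  fixes c K :: real
  assumes "K \<ge> 0" "\<And>t. 0 < t \<Longrightarrow> t \<le> 1 \<Longrightarrow> c \<ge> - K * t"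
  shows "c \<ge> 0"
proof (rule ccontr)
  assume "\<not> c \<ge> 0"
  hence c: "c < 0" by simp
  define t where "t = min 1 (- c / (2 * (K + 1)))"
  have "- c / (2 * (K + 1)) > 0" using c assms(1) by (intro divide_pos_pos) auto
  hence t0: "0 < t" "t \<le> 1" by (auto simp: t_def)
  have "t \<le> - c / (2 * (K + 1))" by (simp add: t_def)
  hence a: "t * (2 * (K + 1)) \<le> - c" using assms(1) by (subst (asm) pos_le_divide_eq) auto
  have "0 \<le> K * t" using assms(1) t0 by simp
  hence "K * t < t * (2 * (K + 1))" using t0 by (simp add: algebra_simps)
  hence "K * t < - c" using a by linarith
  with assms(2)[OF t0] show False by simp
qed

lemma normal_cone_mem: "v \<in> normal_cone C x \<Longrightarrow> x \<in> C"
  by (auto simp: normal_cone_def split: if_splits)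

lemma normal_cone_ineq: "v \<in> normal_cone C x \<Longrightarrow> y \<in> C \<Longrightarrow> inner v (y - x) \<le> 0"
  by (auto simp: normal_cone_def split: if_splits)

lemma normal_cone_mono:
  assumes "v1 \<in> normal_cone C x1" "v2 \<in> normal_cone C x2"
  shows "inner (v1 - v2) (x1 - x2) \<ge> 0"
proof -
  have "inner v1 (x2 - x1) \<le> 0" using assms normal_cone_ineq normal_cone_mem by blast
  moreover have "inner v2 (x1 - x2) \<le> 0" using assms normal_cone_ineq normal_cone_mem by blast
  ultimately show ?thesis by (simp add: inner_diff_left inner_diff_right inner_commute)
qed

lemma zero_normal_cone: "x \<in> C \<Longrightarrow> 0 \<in> normal_cone C x"
  by (simp add: normal_cone_def)

lemma psd_deriv:
  fixes F :: "'a::real_inner \<Rightarrow> 'a" and F' :: "'a \<Rightarrow> 'a \<Rightarrow>\<^sub>L 'a"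
  assumes cvx: "convex C"
    and der: "\<forall>u\<in>C. (F has_derivative blinfun_apply (F' u)) (at u within C)"
    and lip: "\<forall>u\<in>C. \<forall>w\<in>C. norm (F' u - F' w) \<le> L * norm (u - w)"
    and mono: "\<forall>u\<in>C. \<forall>w\<in>C. inner (F u - F w) (u - w) \<ge> 0"
    and yC: "y \<in> C" and zC: "z \<in> C" and L0: "L \<ge> 0"
  shows "inner (blinfun_apply (F' y) (z - y)) (z - y) \<ge> 0"
proof (rule real_small_t)
  define d where "d = z - y"
  show "L / 2 * norm (z - y) ^ 3 \<ge> 0" using L0 by simp
  fix t :: real assume t: "0 < t" "t \<le> 1"
  define u where "u = y + t *\<^sub>R d"
  have "u = (1 - t) *\<^sub>R y + t *\<^sub>R z" by (simp add: u_def d_def algebra_simps)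
  hence uC: "u \<in> C" using t cvx yC zC by (auto intro: convexD)
  have ud: "u - y = t *\<^sub>R d" by (simp add: u_def)
  have tb: "norm (F u - F y - blinfun_apply (F' y) (t *\<^sub>R d)) \<le> L / 2 * (norm (t *\<^sub>R d))\<^sup>2"
    using taylor_bound[OF cvx der lip yC uC L0] ud by simp
  have "inner (F u - F y) (t *\<^sub>R d) \<ge> 0" using mono uC yC ud by metis
  hence m: "inner (F u - F y) d \<ge> 0" using t by (simp add: zero_le_mult_iff)
  have "inner (F u - F y - blinfun_apply (F' y) (t *\<^sub>R d)) d \<le> norm (F u - F y - blinfun_apply (F' y) (t *\<^sub>R d)) * norm d"
    by (rule norm_cauchy_schwarz)
  also have "\<dots> \<le> L / 2 * (norm (t *\<^sub>R d))\<^sup>2 * norm d" by (intro mult_right_mono tb) auto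
  also have "\<dots> = t * (L / 2 * norm d ^ 3 * t)" using t by (simp add: power2_eq_square power3_eq_cube)
  finally have "inner (F u - F y) d - t * inner (blinfun_apply (F' y) d) d \<le> t * (L / 2 * norm d ^ 3 * t)"
    by (simp add: inner_diff_left blinfun.scaleR_right)
  hence h: "t * (- (L / 2 * norm d ^ 3 * t)) \<le> t * inner (blinfun_apply (F' y) d) d" using m by simp
  have "inner (blinfun_apply (F' y) d) d \<ge> - (L / 2 * norm d ^ 3 * t)" by (rule mult_left_le_imp_le[OF h t(1)])
  thus "inner (blinfun_apply (F' y) (z - y)) (z - y) \<ge> - (L / 2 * norm (z - y) ^ 3) * t" by (simp add: d_def)
qed

lemma newton_step:
  fixes F :: "'a::real_inner \<Rightarrow> 'a" and F' :: "'a \<Rightarrow> 'a \<Rightarrow>\<^sub>L 'a"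
  assumes cvx: "convex C"
    and der: "\<forall>u\<in>C. (F has_derivative blinfun_apply (F' u)) (at u within C)"
    and lip: "\<forall>u\<in>C. \<forall>w\<in>C. norm (F' u - F' w) \<le> L * norm (u - w)"
    and mono: "\<forall>u\<in>C. \<forall>w\<in>C. inner (F u - F w) (u - w) \<ge> 0"
    and L0: "L > 0"
    and n0: "\<nu>0 \<in> normal_cone C y0" and n1: "\<nu>1 \<in> normal_cone C y1"
    and lam: "lam > 0" and sh: "0 \<le> \<sigma>h" "\<sigma>h < 1"
    and e: "norm (lam *\<^sub>R (linearization F F' y0 y1 + \<nu>1) + y1 - x) \<le> \<sigma>h * norm (y1 - y0)"
    and r: "lam * L / 2 * norm (lam *\<^sub>R (F y0 + \<nu>0) + y0 - x) \<le> \<theta>"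
  shows "lam * L / 2 * norm (lam *\<^sub>R (F y1 + \<nu>1) + y1 - x) \<le> \<theta> * (\<sigma>h / (1 - \<sigma>h) + \<theta> / (1 - \<sigma>h)\<^sup>2)"
proof -
  have y0C: "y0 \<in> C" and y1C: "y1 \<in> C" using n0 n1 normal_cone_mem by auto
  define d where "d = y1 - y0"
  define R where "R = lam *\<^sub>R (F y0 + \<nu>0) + y0 - x"
  define E where "E = lam *\<^sub>R (linearization F F' y0 y1 + \<nu>1) + y1 - x"
  have ER: "E - R = lam *\<^sub>R blinfun_apply (F' y0) d + lam *\<^sub>R (\<nu>1 - \<nu>0) + d"
    by (simp add: E_def R_def linearization_def d_def algebra_simps)
  have p1: "inner (blinfun_apply (F' y0) d) d \<ge> 0"
    unfolding d_def by (rule psd_deriv[OF cvx der lip mono y0C y1C]) (use L0 in simp)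
  have p2: "inner (\<nu>1 - \<nu>0) d \<ge> 0" unfolding d_def by (rule normal_cone_mono[OF n1 n0])
  have "inner (E - R) d = lam * inner (blinfun_apply (F' y0) d) d + lam * inner (\<nu>1 - \<nu>0) d + (norm d)\<^sup>2"
    by (simp add: ER inner_add_left power2_norm_eq_inner)
  also have "\<dots> \<ge> (norm d)\<^sup>2" using p1 p2 lam by simp
  finally have "(norm d)\<^sup>2 \<le> inner (E - R) d" .
  also have "\<dots> \<le> norm (E - R) * norm d" by (rule norm_cauchy_schwarz)
  also have "\<dots> \<le> (norm E + norm R) * norm d" by (intro mult_right_mono norm_triangle_ineq4) auto
  also have "\<dots> \<le> (\<sigma>h * norm d + norm R) * norm d"
    using e by (intro mult_right_mono) (auto simp: E_def d_def)
  finally have nd: "norm d * norm d \<le> (\<sigma>h * norm d + norm R) * norm d" by (simp add: power2_eq_square)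
  have dR: "(1 - \<sigma>h) * norm d \<le> norm R"
  proof (cases "norm d = 0")
    case True thus ?thesis by simp
  next
    case False
    hence "norm d > 0" by simp
    from mult_right_le_imp_le[OF nd this] show ?thesis by (simp add: algebra_simps)
  qed
  define s where "s = lam * L / 2 * norm d"
  have s0: "s \<ge> 0" using lam L0 by (simp add: s_def)
  have "lam * L / 2 * ((1 - \<sigma>h) * norm d) \<le> lam * L / 2 * norm R"
    using dR lam L0 by (intro mult_left_mono) auto
  also have "\<dots> \<le> \<theta>" using r by (simp add: R_def)
  finally have "(1 - \<sigma>h) * s \<le> \<theta>" by (simp add: s_def algebra_simps)
  hence sb: "s \<le> \<theta> / (1 - \<sigma>h)" using sh by (simp add: pos_le_divide_eq mult.commute)
  have tb: "norm (F y1 - F y0 - blinfun_apply (F' y0) d) \<le> L / 2 * (norm d)\<^sup>2"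
    unfolding d_def by (rule taylor_bound[OF cvx der lip y0C y1C]) (use L0 in simp)
  have G: "lam *\<^sub>R (F y1 + \<nu>1) + y1 - x = E + lam *\<^sub>R (F y1 - F y0 - blinfun_apply (F' y0) d)"
    by (simp add: E_def linearization_def d_def algebra_simps)
  have "norm (lam *\<^sub>R (F y1 + \<nu>1) + y1 - x) \<le> norm E + lam * norm (F y1 - F y0 - blinfun_apply (F' y0) d)"
    unfolding G using lam by (metis abs_of_pos norm_scaleR norm_triangle_ineq)
  also have "\<dots> \<le> \<sigma>h * norm d + lam * (L / 2 * (norm d)\<^sup>2)"
    using e tb lam by (intro add_mono mult_left_mono) (auto simp: E_def d_def)
  finally have "lam * L / 2 * norm (lam *\<^sub>R (F y1 + \<nu>1) + y1 - x) \<le> lam * L / 2 * (\<sigma>h * norm d + lam * (L / 2 * (norm d)\<^sup>2))"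
    using lam L0 by (intro mult_left_mono) auto
  also have "\<dots> = \<sigma>h * s + s\<^sup>2" by (simp add: s_def power2_eq_square algebra_simps)
  also have "\<dots> \<le> \<sigma>h * (\<theta> / (1 - \<sigma>h)) + (\<theta> / (1 - \<sigma>h))\<^sup>2"
    using sb s0 sh by (intro add_mono mult_left_mono power_mono) auto
  also have "\<dots> = \<theta> * (\<sigma>h / (1 - \<sigma>h) + \<theta> / (1 - \<sigma>h)\<^sup>2)"
    by (simp add: power2_eq_square field_simps)
  finally show ?thesis .
qed

lemma tau_facts:
  assumes sh: "0 \<le> \<sigma>h" "\<sigma>h < 1/2"
    and th: "0 < \<theta>" "\<theta> < (1 - \<sigma>h) * (1 - 2 * \<sigma>h)"
    and L0: "L > 0"
    and eta: "\<eta> > 2 * thetahat \<theta> \<sigma>h / L"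
  shows "0 \<le> thetahat \<theta> \<sigma>h" "thetahat \<theta> \<sigma>h < \<theta>" "0 < tau \<theta> \<sigma>h \<eta> L" "tau \<theta> \<sigma>h \<eta> L < 1"
    "thetahat \<theta> \<sigma>h + tau \<theta> \<sigma>h \<eta> L * \<eta> * L / 2 = \<theta> * (1 - tau \<theta> \<sigma>h \<eta> L)\<^sup>2"
    "\<eta> > 0" "0 \<le> 2 * thetahat \<theta> \<sigma>h / (\<eta> * L)" "2 * thetahat \<theta> \<sigma>h / (\<eta> * L) < 1"
proof -
  define th where "th = thetahat \<theta> \<sigma>h"
  have s1: "1 - \<sigma>h > 0" using sh by simp
  show th0: "0 \<le> thetahat \<theta> \<sigma>h" unfolding thetahat_def using sh th s1 by (intro mult_nonneg_nonneg add_nonneg_nonneg) auto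
  have "\<sigma>h / (1 - \<sigma>h) + \<theta> / (1 - \<sigma>h)\<^sup>2 = (\<sigma>h * (1 - \<sigma>h) + \<theta>) / (1 - \<sigma>h)\<^sup>2"
  proof -
    have e1: "\<sigma>h / (1 - \<sigma>h) = (\<sigma>h * (1 - \<sigma>h)) / (1 - \<sigma>h)\<^sup>2" using s1 by (simp add: power2_eq_square)
    show ?thesis by (simp add: e1 add_divide_distrib)
  qed
  also have "\<dots> < 1" using s1 th by (simp add: power2_eq_square algebra_simps)
  finally have "\<sigma>h / (1 - \<sigma>h) + \<theta> / (1 - \<sigma>h)\<^sup>2 < 1" .
  thus thl: "thetahat \<theta> \<sigma>h < \<theta>" unfolding thetahat_def using th by simp
  show eta0: "\<eta> > 0" using eta th0 L0 by (smt (verit) divide_nonneg_pos)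
  define b where "b = 2 * \<theta> + \<eta> * L / 2"
  define c where "c = \<theta> - th"
  define s where "s = sqrt (b\<^sup>2 - 4 * \<theta> * c)"
  have c0: "c > 0" using thl by (simp add: c_def th_def)
  have bpos: "b > 2 * \<theta>" using eta0 L0 by (simp add: b_def)
  have "4 * \<theta> * c \<le> 4 * \<theta> * \<theta>" using th thl th0 mult_nonneg_nonneg[of \<theta> th]
    by (simp add: c_def th_def algebra_simps)
  also have "\<dots> = (2 * \<theta>)\<^sup>2" by (simp add: power2_eq_square)
  also have "\<dots> < b\<^sup>2" using bpos th by (intro power_strict_mono) auto
  finally have Dpos: "b\<^sup>2 - 4 * \<theta> * c > 0" by linarith
  have s0: "s \<ge> 0" unfolding s_def by (rule real_sqrt_ge_zero) (use Dpos in linarith)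
  have ss: "s\<^sup>2 = b\<^sup>2 - 4 * \<theta> * c" unfolding s_def using Dpos by (intro real_sqrt_pow2) linarith
  have tdef: "tau \<theta> \<sigma>h \<eta> L = 2 * c / (b + s)" by (simp add: tau_def Let_def b_def c_def s_def th_def)
  have bs: "b + s > 0" using bpos th s0 by simp
  show "0 < tau \<theta> \<sigma>h \<eta> L" using c0 bs by (simp add: tdef)
  show "tau \<theta> \<sigma>h \<eta> L < 1" using c0 bs bpos s0 thl th0 by (simp add: tdef c_def th_def)
  define t where "t = tau \<theta> \<sigma>h \<eta> L"
  have tb: "t * (b + s) = 2 * c" using bs by (simp add: t_def tdef)
  have "(\<theta> * t\<^sup>2 - b * t + c) * (b + s)\<^sup>2 = \<theta> * (t * (b + s))\<^sup>2 - b * (t * (b + s)) * (b + s) + c * (b + s)\<^sup>2"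
    by (simp add: power2_eq_square algebra_simps)
  also have "\<dots> = c * (4 * \<theta> * c - b\<^sup>2 + s\<^sup>2)" unfolding tb by (simp add: power2_eq_square algebra_simps)
  also have "\<dots> = 0" using ss by simp
  finally have "\<theta> * t\<^sup>2 - b * t + c = 0" using bs by simp
  thus "thetahat \<theta> \<sigma>h + tau \<theta> \<sigma>h \<eta> L * \<eta> * L / 2 = \<theta> * (1 - tau \<theta> \<sigma>h \<eta> L)\<^sup>2"
    unfolding t_def[symmetric] by (simp add: b_def c_def th_def power2_eq_square algebra_simps)
  show "0 \<le> 2 * thetahat \<theta> \<sigma>h / (\<eta> * L)" using th0 eta0 L0 by simp
  show "2 * thetahat \<theta> \<sigma>h / (\<eta> * L) < 1" using eta eta0 L0 by (simp add: field_simps)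
qed

locale setting =
  fixes F :: "'a::real_inner \<Rightarrow> 'a" and F' :: "'a \<Rightarrow> 'a \<Rightarrow>\<^sub>L 'a" and C :: "'a set"
    and L \<sigma>h \<theta> \<eta> :: real and x y \<nu> :: "nat \<Rightarrow> 'a" and lam :: "nat \<Rightarrow> real"
  assumes C_convex: "convex C"
    and F_mono: "\<forall>u\<in>C. \<forall>w\<in>C. inner (F u - F w) (u - w) \<ge> 0"
    and F_deriv: "\<forall>u\<in>C. (F has_derivative blinfun_apply (F' u)) (at u within C)"
    and F'_lip: "\<forall>u\<in>C. \<forall>w\<in>C. norm (F' u - F' w) \<le> L * norm (u - w)"
    and L_pos: "L > 0"
    and sh: "0 \<le> \<sigma>h" "\<sigma>h < 1/2"
    and th: "0 < \<theta>" "\<theta> < (1 - \<sigma>h) * (1 - 2 * \<sigma>h)"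
    and eta: "\<eta> > 2 * thetahat \<theta> \<sigma>h / L"
    and alg: "alg2 F F' C L \<sigma>h \<theta> \<eta> x y \<nu> lam"
begin

abbreviation "thh \<equiv> thetahat \<theta> \<sigma>h"
abbreviation "tt \<equiv> tau \<theta> \<sigma>h \<eta> L"
abbreviation "ss \<equiv> 2 * thetahat \<theta> \<sigma>h / (\<eta> * L)"

lemmas tf = tau_facts[OF sh th L_pos eta]

lemma algk:
  assumes "k \<ge> 1"
  shows "(if lam k * L / 2 * norm (lam k *\<^sub>R (F (y (k - 1)) + \<nu> (k - 1)) + y (k - 1) - x (k - 1))
              \<le> thetahat \<theta> \<sigma>h
         then y k = y (k - 1) \<and> \<nu> k = \<nu> (k - 1)
         else \<nu> k \<in> normal_cone C (y k) \<and>
              norm (lam k *\<^sub>R (linearization F F' (y (k - 1)) (y k) + \<nu> k) + y k - x (k - 1))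
                \<le> \<sigma>h * norm (y k - y (k - 1)))"
    "(if lam k * norm (y k - x (k - 1)) \<ge> \<eta>
         then x k = x (k - 1) - (tau \<theta> \<sigma>h \<eta> L * lam k) *\<^sub>R (F (y k) + \<nu> k) \<and>
              lam (k + 1) = (1 - tau \<theta> \<sigma>h \<eta> L) * lam k
         else x k = x (k - 1) \<and> lam (k + 1) = lam k / (1 - tau \<theta> \<sigma>h \<eta> L))"
  using alg assms unfolding alg2_def by blast+

lemma E_step:
  assumes k: "k \<ge> 1" and lk: "lam k > 0" and n0: "\<nu> (k - 1) \<in> normal_cone C (y (k - 1))"
    and b: "lam k * L / 2 * norm (lam k *\<^sub>R (F (y (k - 1)) + \<nu> (k - 1)) + y (k - 1) - x (k - 1)) \<le> \<theta>"
  shows "\<nu> k \<in> normal_cone C (y k) \<and> lam k * L / 2 * norm (lam k *\<^sub>R (F (y k) + \<nu> k) + y k - x (k - 1)) \<le> thh"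
proof (cases "lam k * L / 2 * norm (lam k *\<^sub>R (F (y (k - 1)) + \<nu> (k - 1)) + y (k - 1) - x (k - 1)) \<le> thh")
  case True
  with algk(1)[OF k] have "y k = y (k - 1) \<and> \<nu> k = \<nu> (k - 1)" by simp
  thus ?thesis using True n0 by simp
next
  case False
  with algk(1)[OF k] have n1: "\<nu> k \<in> normal_cone C (y k)"
    and e: "norm (lam k *\<^sub>R (linearization F F' (y (k - 1)) (y k) + \<nu> k) + y k - x (k - 1))
                \<le> \<sigma>h * norm (y k - y (k - 1))" by auto
  have "lam k * L / 2 * norm (lam k *\<^sub>R (F (y k) + \<nu> k) + y k - x (k - 1)) \<le> \<theta> * (\<sigma>h / (1 - \<sigma>h) + \<theta> / (1 - \<sigma>h)\<^sup>2)"
    by (rule newton_step[OF C_convex F_deriv F'_lip F_mono L_pos n0 n1 lk _ _ e b]) (use sh in auto)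
  thus ?thesis using n1 by (simp add: thetahat_def)
qed

lemma inv_step:
  assumes k: "k \<ge> 1" and lk: "lam k > 0" and n0: "\<nu> (k - 1) \<in> normal_cone C (y (k - 1))"
    and b: "lam k * L / 2 * norm (lam k *\<^sub>R (F (y (k - 1)) + \<nu> (k - 1)) + y (k - 1) - x (k - 1)) \<le> \<theta>"
  shows "lam (k + 1) > 0 \<and> \<nu> k \<in> normal_cone C (y k) \<and>
     lam (k + 1) * L / 2 * norm (lam (k + 1) *\<^sub>R (F (y k) + \<nu> k) + y k - x k) \<le> \<theta>"
proof -
  from E_step[OF assms] have n1: "\<nu> k \<in> normal_cone C (y k)"
    and E: "lam k * L / 2 * norm (lam k *\<^sub>R (F (y k) + \<nu> k) + y k - x (k - 1)) \<le> thh" by auto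
  define v where "v = F (y k) + \<nu> k"
  define a where "a = y k - x (k - 1)"
  define G where "G = lam k *\<^sub>R v + a"
  have EG: "lam k * L / 2 * norm G \<le> thh" using E by (simp add: G_def v_def a_def algebra_simps)
  have t0: "0 < tt" "tt < 1" using tf by auto
  show ?thesis
  proof (cases "lam k * norm (y k - x (k - 1)) \<ge> \<eta>")
    case True
    with algk(2)[OF k] have xk: "x k = x (k - 1) - (tt * lam k) *\<^sub>R v" and lk1: "lam (k + 1) = (1 - tt) * lam k"
      by (auto simp: v_def)
    have h: "lam (k + 1) + tt * lam k = lam k" using lk1 by (simp add: algebra_simps)
    have "lam (k + 1) *\<^sub>R v + y k - x k = (lam (k + 1) + tt * lam k) *\<^sub>R v + a"
      unfolding xk a_def scaleR_add_left by (simp add: algebra_simps)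
    also have "\<dots> = G" unfolding h by (simp add: G_def)
    finally have vec: "lam (k + 1) *\<^sub>R (F (y k) + \<nu> k) + y k - x k = G" by (simp add: v_def)
    have "lam (k + 1) * L / 2 * norm G = (1 - tt) * (lam k * L / 2 * norm G)" using lk1 by simp
    also have "\<dots> \<le> (1 - tt) * thh" using EG t0 by (intro mult_left_mono) auto
    also have "\<dots> \<le> thh" using t0 tf by (simp add: algebra_simps)
    also have "\<dots> \<le> \<theta>" using tf by simp
    finally show ?thesis using vec lk1 t0 lk n1 by simp
  next
    case False
    with algk(2)[OF k] have xk: "x k = x (k - 1)" and lk1: "lam (k + 1) = lam k / (1 - tt)" by auto
    have an: "lam k * norm a \<le> \<eta>" using False by (simp add: a_def)
    have c1: "(1 / (1 - tt)) *\<^sub>R G = (lam k / (1 - tt)) *\<^sub>R v + (1 / (1 - tt)) *\<^sub>R a"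
      by (simp add: G_def scaleR_add_right)
    have c2: "(1 / (1 - tt)) *\<^sub>R a - (tt / (1 - tt)) *\<^sub>R a = a"
      using t0 by (simp add: scaleR_diff_left[symmetric] diff_divide_distrib[symmetric])
    have "(1 / (1 - tt)) *\<^sub>R G - (tt / (1 - tt)) *\<^sub>R a = (lam k / (1 - tt)) *\<^sub>R v + a"
      using c1 c2 by (simp add: algebra_simps)
    also have "\<dots> = lam (k + 1) *\<^sub>R (F (y k) + \<nu> k) + y k - x k"
      using lk1 by (simp add: xk a_def v_def)
    finally have vec: "lam (k + 1) *\<^sub>R (F (y k) + \<nu> k) + y k - x k = (1 / (1 - tt)) *\<^sub>R G - (tt / (1 - tt)) *\<^sub>R a" by simp
    have "norm ((1 / (1 - tt)) *\<^sub>R G - (tt / (1 - tt)) *\<^sub>R a) \<le> (1 / (1 - tt)) * norm G + (tt / (1 - tt)) * norm a"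
      using t0 by (metis (no_types, lifting) abs_of_nonneg divide_nonneg_nonneg less_eq_real_def norm_scaleR norm_triangle_ineq4 diff_ge_0_iff_ge zero_le_one)
    hence "lam (k + 1) * L / 2 * norm ((1 / (1 - tt)) *\<^sub>R G - (tt / (1 - tt)) *\<^sub>R a)
        \<le> lam (k + 1) * L / 2 * ((1 / (1 - tt)) * norm G + (tt / (1 - tt)) * norm a)"
      using lk t0 L_pos lk1 by (intro mult_left_mono) auto
    also have "\<dots> = ((lam k * L / 2 * norm G) + tt * (L / 2) * (lam k * norm a)) / (1 - tt)\<^sup>2"
    proof -
      have nz: "1 - tt \<noteq> 0" using t0 by simp
      have aux: "(l / q) * L / 2 * ((1 / q) * g + (t / q) * \<alpha>) = (l * L / 2 * g + t * (L / 2) * (l * \<alpha>)) / q\<^sup>2"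
        if "q \<noteq> 0" for l q g t \<alpha> :: real using that by (simp add: field_simps power2_eq_square)
      show ?thesis unfolding lk1 by (rule aux[OF nz])
    qed
    also have "\<dots> \<le> (thh + tt * (L / 2) * \<eta>) / (1 - tt)\<^sup>2"
      using EG an t0 L_pos by (intro divide_right_mono add_mono mult_left_mono) auto
    also have "\<dots> = \<theta>" using tf(5) t0 by (simp add: field_simps)
    finally have B: "lam (k + 1) * L / 2 * norm ((1 / (1 - tt)) *\<^sub>R G - (tt / (1 - tt)) *\<^sub>R a) \<le> \<theta>" .
    have "lam (k + 1) > 0" using lk1 t0 lk by simp
    thus ?thesis unfolding vec using B n1 by blast
  qed
qed

lemma inv_all:
  assumes "k \<ge> 1"
  shows "lam k > 0 \<and> \<nu> (k - 1) \<in> normal_cone C (y (k - 1)) \<and>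
     lam k * L / 2 * norm (lam k *\<^sub>R (F (y (k - 1)) + \<nu> (k - 1)) + y (k - 1) - x (k - 1)) \<le> \<theta>"
  using assms
proof (induction k rule: nat_induct_at_least)
  case base
  have a: "x 0 \<in> C" "y 0 = x 0" "\<nu> 0 = 0" "lam 1 > 0" "(lam 1)\<^sup>2 * norm (F (y 0)) \<le> 2 * \<theta> / L"
    using alg unfolding alg2_def by auto
  have "lam 1 * L / 2 * norm (lam 1 *\<^sub>R (F (y 0) + \<nu> 0) + y 0 - x 0) = L / 2 * ((lam 1)\<^sup>2 * norm (F (y 0)))"
    using a by (simp add: power2_eq_square)
  also have "\<dots> \<le> L / 2 * (2 * \<theta> / L)" using a L_pos by (intro mult_left_mono) auto
  also have "\<dots> = \<theta>" using L_pos by simp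
  finally show ?case using a zero_normal_cone by auto
next
  case (Suc n)
  thus ?case using inv_step[of n] by simp
qed

lemma E_all:
  assumes "k \<ge> 1"
  shows "\<nu> k \<in> normal_cone C (y k) \<and> lam k * L / 2 * norm (lam k *\<^sub>R (F (y k) + \<nu> k) + y k - x (k - 1)) \<le> thh"
  using E_step[OF assms] inv_all[OF assms] by blast

lemma hpe_A:
  assumes k: "k \<ge> 1" and A: "lam k * norm (y k - x (k - 1)) \<ge> \<eta>"
  shows "norm (lam k *\<^sub>R (F (y k) + \<nu> k) + y k - x (k - 1)) \<le> ss * norm (y k - x (k - 1))"
proof -
  have lk: "lam k > 0" using inv_all[OF k] by simp
  have E: "lam k * L / 2 * norm (lam k *\<^sub>R (F (y k) + \<nu> k) + y k - x (k - 1)) \<le> thh" using E_all[OF k] by simp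
  have e0: "\<eta> > 0" using tf by simp
  have "\<eta> * (L / 2 * norm (lam k *\<^sub>R (F (y k) + \<nu> k) + y k - x (k - 1)))
      \<le> lam k * norm (y k - x (k - 1)) * (L / 2 * norm (lam k *\<^sub>R (F (y k) + \<nu> k) + y k - x (k - 1)))"
    using A L_pos by (intro mult_right_mono) auto
  also have "\<dots> = norm (y k - x (k - 1)) * (lam k * L / 2 * norm (lam k *\<^sub>R (F (y k) + \<nu> k) + y k - x (k - 1)))"
    by (simp add: algebra_simps)
  also have "\<dots> \<le> norm (y k - x (k - 1)) * thh" using E by (intro mult_left_mono) auto
  finally have "\<eta> * L / 2 * norm (lam k *\<^sub>R (F (y k) + \<nu> k) + y k - x (k - 1)) \<le> thh * norm (y k - x (k - 1))"
    by (simp add: algebra_simps)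
  thus ?thesis using e0 L_pos by (simp add: field_simps)
qed

end

lemma lin_aux:
  fixes N na nb sna P t :: real
  assumes "N = na + 2 * P + nb" "N \<le> sna" "t \<le> nb"
  shows "P + (na - sna) / 2 + t / 2 \<le> 0"
  using assms by (simp add: field_simps)

lemma key_step:
  fixes x0 x1 y v w :: "'a::real_inner"
  assumes x1: "x1 = x0 - (\<tau> * lm) *\<^sub>R v"
    and hE: "norm (lm *\<^sub>R v + y - x0) \<le> \<sigma> * norm (y - x0)"
    and tau: "0 < \<tau>" "\<tau> \<le> 1" and sig: "0 \<le> \<sigma>"
  shows "lm * inner (y - w) v + (1 - \<sigma>\<^sup>2) / 2 * (norm (y - x0))\<^sup>2 \<le> ((norm (x0 - w))\<^sup>2 - (norm (x1 - w))\<^sup>2) / (2 * \<tau>)"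
proof -
  define a where "a = y - x0"
  define b where "b = lm *\<^sub>R v"
  define P where "P = inner a b"
  define Q where "Q = inner (x0 - w) b"
  have f1: "(norm (a + b))\<^sup>2 = (norm a)\<^sup>2 + 2 * P + (norm b)\<^sup>2"
    by (simp add: P_def power2_norm_eq_inner inner_add_left inner_add_right inner_commute)
  have e: "x1 - w = (x0 - w) - \<tau> *\<^sub>R b" by (simp add: x1 b_def algebra_simps)
  have "(norm (x1 - w))\<^sup>2 = inner ((x0 - w) - \<tau> *\<^sub>R b) ((x0 - w) - \<tau> *\<^sub>R b)"
    by (simp only: e power2_norm_eq_inner)
  also have "\<dots> = (norm (x0 - w))\<^sup>2 - 2 * \<tau> * Q + \<tau>\<^sup>2 * (norm b)\<^sup>2"
    unfolding Q_def power2_norm_eq_inner inner_diff_left inner_diff_right inner_scaleR_left inner_scaleR_right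
    by (simp add: inner_commute power2_eq_square algebra_simps)
  finally have f2: "(norm (x1 - w))\<^sup>2 = (norm (x0 - w))\<^sup>2 - 2 * \<tau> * Q + \<tau>\<^sup>2 * (norm b)\<^sup>2" .
  have "norm (a + b) \<le> \<sigma> * norm a" using hE by (simp add: a_def b_def algebra_simps)
  hence f3: "(norm (a + b))\<^sup>2 \<le> \<sigma>\<^sup>2 * (norm a)\<^sup>2"
    by (metis norm_ge_zero power_mono power_mult_distrib)
  have f4: "lm * inner (y - w) v = P + Q"
    by (simp add: P_def Q_def a_def b_def inner_diff_left inner_diff_right algebra_simps)
  have rhs: "((norm (x0 - w))\<^sup>2 - (norm (x1 - w))\<^sup>2) / (2 * \<tau>) = Q - \<tau> * (norm b)\<^sup>2 / 2"
    unfolding f2 using tau by (simp add: field_simps power2_eq_square)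
  have nb: "\<tau> * (norm b)\<^sup>2 \<le> (norm b)\<^sup>2" using tau mult_right_mono[of \<tau> 1 "(norm b)\<^sup>2"] by simp
  have "P + ((norm a)\<^sup>2 - \<sigma>\<^sup>2 * (norm a)\<^sup>2) / 2 + \<tau> * (norm b)\<^sup>2 / 2 \<le> 0"
    using lin_aux[OF f1 f3 nb] by simp
  hence "P + (1 - \<sigma>\<^sup>2) / 2 * (norm a)\<^sup>2 + \<tau> * (norm b)\<^sup>2 / 2 \<le> 0"
    by (simp add: algebra_simps add_divide_distrib diff_divide_distrib)
  thus ?thesis unfolding f4 rhs by (simp add: a_def algebra_simps)
qed

lemma y_dist:
  fixes x0 y v z :: "'a::real_inner"
  assumes hE: "norm (lm *\<^sub>R v + y - x0) \<le> \<sigma> * norm (y - x0)"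
    and lm: "lm > 0" and hZ: "inner v (y - z) \<ge> 0" and sig: "0 \<le> \<sigma>"
  shows "(1 - \<sigma>\<^sup>2) * (norm (y - z))\<^sup>2 \<le> (norm (x0 - z))\<^sup>2"
proof -
  define a where "a = y - x0"
  define b where "b = lm *\<^sub>R v"
  define t where "t = norm (y - z)"
  define al where "al = norm a"
  have "x0 - z = (y - z) - a" by (simp add: a_def)
  hence e1: "(norm (x0 - z))\<^sup>2 = t\<^sup>2 - 2 * inner a (y - z) + al\<^sup>2"
    by (simp add: t_def al_def power2_norm_eq_inner inner_diff_left inner_diff_right inner_commute)
  have "inner b (y - z) \<ge> 0" using hZ lm by (simp add: b_def)
  moreover have "inner (a + b) (y - z) \<le> norm (a + b) * t" unfolding t_def by (rule norm_cauchy_schwarz)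
  moreover have "norm (a + b) \<le> \<sigma> * al" using hE by (simp add: a_def b_def al_def algebra_simps)
  ultimately have "inner a (y - z) \<le> \<sigma> * al * t"
    by (smt (verit, ccfv_SIG) inner_add_left mult_right_mono norm_ge_zero t_def)
  hence "(norm (x0 - z))\<^sup>2 \<ge> t\<^sup>2 - 2 * \<sigma> * al * t + al\<^sup>2" using e1 by simp
  moreover have "t\<^sup>2 - 2 * \<sigma> * al * t + al\<^sup>2 = (1 - \<sigma>\<^sup>2) * t\<^sup>2 + (al - \<sigma> * t)\<^sup>2"
    by (simp add: power2_eq_square algebra_simps)
  ultimately have "(1 - \<sigma>\<^sup>2) * t\<^sup>2 + (al - \<sigma> * t)\<^sup>2 \<le> (norm (x0 - z))\<^sup>2" by simp
  thus ?thesis using zero_le_power2[of "al - \<sigma> * t"] unfolding t_def by linarith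
qed

lemma telescope1: fixes k :: nat shows "(\<Sum>l=1..k. f (l - 1) - f l) = f 0 - (f k :: real)"
  by (induction k) auto

lemma telescope1v: fixes k :: nat shows "(\<Sum>l=1..k. f (l - 1) - f l) = f 0 - (f k :: 'a::ab_group_add)"
  by (induction k) auto

lemma inv_sum_bound:
  fixes \<alpha> :: "nat \<Rightarrow> real"
  assumes "\<And>l. l \<in> {1..k} \<Longrightarrow> \<alpha> l > 0"
  shows "(real k)^3 \<le> (\<Sum>l=1..k. (\<alpha> l)\<^sup>2) * (\<Sum>l=1..k. 1 / \<alpha> l)\<^sup>2"
proof -
  have c1: "(\<Sum>l=1..k. 1 * \<alpha> l)\<^sup>2 \<le> (\<Sum>l=1..k. 1\<^sup>2) * (\<Sum>l=1..k. (\<alpha> l)\<^sup>2)"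
    by (rule Cauchy_Schwarz_ineq_sum)
  have c2: "(\<Sum>l=1..k. sqrt (\<alpha> l) * (1 / sqrt (\<alpha> l)))\<^sup>2 \<le> (\<Sum>l=1..k. (sqrt (\<alpha> l))\<^sup>2) * (\<Sum>l=1..k. (1 / sqrt (\<alpha> l))\<^sup>2)"
    by (rule Cauchy_Schwarz_ineq_sum)
  have e1: "(\<Sum>l=1..k. sqrt (\<alpha> l) * (1 / sqrt (\<alpha> l))) = real k"
  proof -
    have "(\<Sum>l=1..k. sqrt (\<alpha> l) * (1 / sqrt (\<alpha> l))) = (\<Sum>l=1..k. (1::real))"
    proof (rule sum.cong)
      fix l assume "l \<in> {1..k}"
      hence "\<alpha> l > 0" using assms by blast
      thus "sqrt (\<alpha> l) * (1 / sqrt (\<alpha> l)) = 1" by simp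
    qed simp
    thus ?thesis by simp
  qed
  have e2: "(\<Sum>l=1..k. (sqrt (\<alpha> l))\<^sup>2) = (\<Sum>l=1..k. \<alpha> l)"
  proof (rule sum.cong)
    fix l assume "l \<in> {1..k}"
    hence "\<alpha> l > 0" using assms by blast
    thus "(sqrt (\<alpha> l))\<^sup>2 = \<alpha> l" by simp
  qed simp
  have e3: "(\<Sum>l=1..k. (1 / sqrt (\<alpha> l))\<^sup>2) = (\<Sum>l=1..k. 1 / \<alpha> l)"
  proof (rule sum.cong)
    fix l assume "l \<in> {1..k}"
    hence "\<alpha> l > 0" using assms by blast
    thus "(1 / sqrt (\<alpha> l))\<^sup>2 = 1 / \<alpha> l" by (simp add: power_divide)
  qed simp
  define S1 where "S1 = (\<Sum>l=1..k. \<alpha> l)"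
  define S2 where "S2 = (\<Sum>l=1..k. (\<alpha> l)\<^sup>2)"
  define S3 where "S3 = (\<Sum>l=1..k. 1 / \<alpha> l)"
  have S1: "S1\<^sup>2 \<le> real k * S2" using c1 by (simp add: S1_def S2_def)
  have S2: "(real k)\<^sup>2 \<le> S1 * S3" using c2 e1 e2 e3 by (simp add: S1_def S3_def)
  have pos': "0 \<le> \<alpha> l" if "l \<in> {1..k}" for l by (meson assms less_imp_le that)
  have p1: "S1 \<ge> 0" "S3 \<ge> 0" unfolding S1_def S3_def
    by (rule sum_nonneg, rule pos', assumption) (rule sum_nonneg, rule divide_nonneg_nonneg, simp, rule pos', assumption)
  have "((real k)\<^sup>2)\<^sup>2 \<le> (S1 * S3)\<^sup>2" using S2 by (intro power_mono) auto
  also have "\<dots> = S1\<^sup>2 * S3\<^sup>2" by (simp add: power_mult_distrib)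
  also have "\<dots> \<le> (real k * S2) * S3\<^sup>2" using S1 by (intro mult_right_mono) auto
  finally have "real k * (real k)^3 \<le> real k * (S2 * S3\<^sup>2)" by (simp add: power2_eq_square power3_eq_cube algebra_simps)
  hence "k = 0 \<or> (real k)^3 \<le> S2 * S3\<^sup>2" by (auto simp: mult_le_cancel_left)
  thus ?thesis by (auto simp: S2_def S3_def)
qed

lemma erg_identity:
  fixes Y V :: "nat \<Rightarrow> 'a::real_inner" and c :: "nat \<Rightarrow> real"
  assumes LA: "LA = (\<Sum>l\<in>I. c l)" and LA0: "LA \<noteq> 0"
    and ya: "ya = (1 / LA) *\<^sub>R (\<Sum>l\<in>I. c l *\<^sub>R Y l)" and va: "va = (1 / LA) *\<^sub>R (\<Sum>l\<in>I. c l *\<^sub>R V l)"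
  shows "(\<Sum>l\<in>I. c l * inner (Y l - z) (V l - u)) = (\<Sum>l\<in>I. c l * inner (Y l - ya) (V l - va)) + LA * inner (ya - z) (va - u)"
proof -
  have sY: "(\<Sum>l\<in>I. c l *\<^sub>R Y l) = LA *\<^sub>R ya" using LA0 by (simp add: ya)
  have sV: "(\<Sum>l\<in>I. c l *\<^sub>R V l) = LA *\<^sub>R va" using LA0 by (simp add: va)
  have zY: "(\<Sum>l\<in>I. c l *\<^sub>R (Y l - ya)) = 0"
  proof -
    have "(\<Sum>l\<in>I. c l *\<^sub>R (Y l - ya)) = (\<Sum>l\<in>I. c l *\<^sub>R Y l) - (\<Sum>l\<in>I. c l) *\<^sub>R ya"
      by (simp add: scaleR_diff_right sum_subtractf scaleR_sum_left)
    thus ?thesis using sY LA by simp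
  qed
  have zV: "(\<Sum>l\<in>I. c l *\<^sub>R (V l - va)) = 0"
  proof -
    have "(\<Sum>l\<in>I. c l *\<^sub>R (V l - va)) = (\<Sum>l\<in>I. c l *\<^sub>R V l) - (\<Sum>l\<in>I. c l) *\<^sub>R va"
      by (simp add: scaleR_diff_right sum_subtractf scaleR_sum_left)
    thus ?thesis using sV LA by simp
  qed
  have hY: "(\<Sum>l\<in>I. c l * inner (Y l - ya) w) = 0" for w
  proof -
    have "(\<Sum>l\<in>I. c l * inner (Y l - ya) w) = inner (\<Sum>l\<in>I. c l *\<^sub>R (Y l - ya)) w"
      by (simp add: inner_sum_left)
    thus ?thesis using zY by simp
  qed
  have hV: "(\<Sum>l\<in>I. c l * inner w (V l - va)) = 0" for w
  proof -
    have "(\<Sum>l\<in>I. c l * inner w (V l - va)) = inner w (\<Sum>l\<in>I. c l *\<^sub>R (V l - va))"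
      by (simp add: inner_sum_right)
    thus ?thesis using zV by simp
  qed
  have pt: "c l * inner (Y l - z) (V l - u) = c l * inner (Y l - ya) (V l - va) + c l * inner (Y l - ya) (va - u)
      + c l * inner (ya - z) (V l - va) + c l * inner (ya - z) (va - u)" for l
  proof -
    have "inner (Y l - z) (V l - u) = inner ((Y l - ya) + (ya - z)) ((V l - va) + (va - u))" by simp
    also have "\<dots> = inner (Y l - ya) (V l - va) + inner (Y l - ya) (va - u) + inner (ya - z) (V l - va) + inner (ya - z) (va - u)"
      by (simp only: inner_add_left inner_add_right add.assoc)
    finally show ?thesis by (simp add: algebra_simps)
  qed
  have "(\<Sum>l\<in>I. c l * inner (Y l - z) (V l - u)) = (\<Sum>l\<in>I. c l * inner (Y l - ya) (V l - va)) + (\<Sum>l\<in>I. c l * inner (Y l - ya) (va - u))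
      + (\<Sum>l\<in>I. c l * inner (ya - z) (V l - va)) + (\<Sum>l\<in>I. c l * inner (ya - z) (va - u))"
    unfolding pt by (simp add: sum.distrib)
  also have "\<dots> = (\<Sum>l\<in>I. c l * inner (Y l - ya) (V l - va)) + LA * inner (ya - z) (va - u)"
    using hY hV by (simp add: LA sum_distrib_right)
  finally show ?thesis .
qed

locale hpe =
  fixes X Y V :: "nat \<Rightarrow> 'a::real_inner" and lm :: "nat \<Rightarrow> real" and k :: nat and \<tau> \<sigma> \<eta> :: real
  assumes hX: "\<And>l. l \<in> {1..k} \<Longrightarrow> X l = X (l - 1) - (\<tau> * lm l) *\<^sub>R V l"
    and hE: "\<And>l. l \<in> {1..k} \<Longrightarrow> norm (lm l *\<^sub>R V l + Y l - X (l - 1)) \<le> \<sigma> * norm (Y l - X (l - 1))"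
    and hL: "\<And>l. l \<in> {1..k} \<Longrightarrow> lm l > 0"
    and hA: "\<And>l. l \<in> {1..k} \<Longrightarrow> lm l * norm (Y l - X (l - 1)) \<ge> \<eta>"
    and tau: "0 < \<tau>" "\<tau> < 1" and sig: "0 \<le> \<sigma>" "\<sigma> < 1" and eta: "\<eta> > 0"
    and k1: "k \<ge> 1"
begin

lemma step: "l \<in> {1..k} \<Longrightarrow> lm l * inner (Y l - w) (V l) + (1 - \<sigma>\<^sup>2) / 2 * (norm (Y l - X (l - 1)))\<^sup>2
   \<le> ((norm (X (l - 1) - w))\<^sup>2 - (norm (X l - w))\<^sup>2) / (2 * \<tau>)"
  by (rule key_step[OF hX hE]) (use tau sig in auto)

lemma fejer:
  assumes hZ: "\<And>l. l \<in> {1..k} \<Longrightarrow> inner (V l) (Y l - z) \<ge> 0" and l: "l \<in> {1..k}"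
  shows "norm (X l - z) \<le> norm (X (l - 1) - z)"
proof -
  have a: "lm l * inner (Y l - z) (V l) \<ge> 0" using hZ[OF l] hL[OF l] by (simp add: inner_commute)
  have b: "(1 - \<sigma>\<^sup>2) / 2 * (norm (Y l - X (l - 1)))\<^sup>2 \<ge> 0" using sig by (simp add: power_le_one)
  have "0 \<le> ((norm (X (l - 1) - z))\<^sup>2 - (norm (X l - z))\<^sup>2) / (2 * \<tau>)" using step[OF l, of z] a b by linarith
  hence "(norm (X l - z))\<^sup>2 \<le> (norm (X (l - 1) - z))\<^sup>2" using tau by (simp add: divide_nonneg_pos zero_le_divide_iff)
  thus ?thesis by (simp add: power_mono_iff)
qed

lemma fejer0:
  assumes hZ: "\<And>l. l \<in> {1..k} \<Longrightarrow> inner (V l) (Y l - z) \<ge> 0"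
  shows "l \<le> k \<Longrightarrow> norm (X l - z) \<le> norm (X 0 - z)"
proof (induction l)
  case 0 thus ?case by simp
next
  case (Suc l)
  have "norm (X (Suc l) - z) \<le> norm (X (Suc l - 1) - z)" by (rule fejer[OF hZ]) (use Suc in auto)
  thus ?case using Suc by simp
qed

lemma sum_step: "(\<Sum>l=1..k. lm l * inner (Y l - w) (V l) + (1 - \<sigma>\<^sup>2) / 2 * (norm (Y l - X (l - 1)))\<^sup>2)
   \<le> ((norm (X 0 - w))\<^sup>2 - (norm (X k - w))\<^sup>2) / (2 * \<tau>)"
proof -
  have "(\<Sum>l=1..k. lm l * inner (Y l - w) (V l) + (1 - \<sigma>\<^sup>2) / 2 * (norm (Y l - X (l - 1)))\<^sup>2)
     \<le> (\<Sum>l=1..k. ((norm (X (l - 1) - w))\<^sup>2 - (norm (X l - w))\<^sup>2) / (2 * \<tau>))"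
    by (rule sum_mono) (rule step)
  also have "\<dots> = (\<Sum>l=1..k. (norm (X (l - 1) - w))\<^sup>2 - (norm (X l - w))\<^sup>2) / (2 * \<tau>)"
    by (simp add: sum_divide_distrib)
  also have "\<dots> = ((norm (X 0 - w))\<^sup>2 - (norm (X k - w))\<^sup>2) / (2 * \<tau>)"
    by (subst telescope1[where f = "\<lambda>l. (norm (X l - w))\<^sup>2"]) simp
  finally show ?thesis .
qed

lemma sumW: "(\<Sum>l=1..k. lm l * inner (Y l - w) (V l)) \<le> ((norm (X 0 - w))\<^sup>2 - (norm (X k - w))\<^sup>2) / (2 * \<tau>)"
proof -
  have "(\<Sum>l=1..k. lm l * inner (Y l - w) (V l)) \<le> (\<Sum>l=1..k. lm l * inner (Y l - w) (V l) + (1 - \<sigma>\<^sup>2) / 2 * (norm (Y l - X (l - 1)))\<^sup>2)"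
    using sig by (intro sum_mono) (simp add: power_le_one)
  thus ?thesis using sum_step[of w] by linarith
qed

lemma sumA:
  assumes hZ: "\<And>l. l \<in> {1..k} \<Longrightarrow> inner (V l) (Y l - z) \<ge> 0"
  shows "(1 - \<sigma>\<^sup>2) * \<tau> * (\<Sum>l=1..k. (norm (Y l - X (l - 1)))\<^sup>2) \<le> (norm (X 0 - z))\<^sup>2"
proof -
  have "(\<Sum>l=1..k. (1 - \<sigma>\<^sup>2) / 2 * (norm (Y l - X (l - 1)))\<^sup>2) \<le> (\<Sum>l=1..k. lm l * inner (Y l - z) (V l) + (1 - \<sigma>\<^sup>2) / 2 * (norm (Y l - X (l - 1)))\<^sup>2)"
  proof (rule sum_mono)
    fix l assume l: "l \<in> {1..k}"
    have "lm l * inner (Y l - z) (V l) \<ge> 0" using hZ[OF l] hL[OF l] by (simp add: inner_commute)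
    thus "(1 - \<sigma>\<^sup>2) / 2 * (norm (Y l - X (l - 1)))\<^sup>2 \<le> lm l * inner (Y l - z) (V l) + (1 - \<sigma>\<^sup>2) / 2 * (norm (Y l - X (l - 1)))\<^sup>2" by simp
  qed
  also have "\<dots> \<le> ((norm (X 0 - z))\<^sup>2 - (norm (X k - z))\<^sup>2) / (2 * \<tau>)" by (rule sum_step)
  also have "\<dots> \<le> (norm (X 0 - z))\<^sup>2 / (2 * \<tau>)" using tau by (simp add: divide_right_mono)
  finally have "(1 - \<sigma>\<^sup>2) / 2 * (\<Sum>l=1..k. (norm (Y l - X (l - 1)))\<^sup>2) \<le> (norm (X 0 - z))\<^sup>2 / (2 * \<tau>)"
    by (simp add: sum_distrib_left)
  thus ?thesis using tau by (simp add: field_simps)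
qed

lemma sumV: "\<tau> *\<^sub>R (\<Sum>l=1..k. lm l *\<^sub>R V l) = X 0 - X k"
proof -
  have "\<tau> *\<^sub>R (\<Sum>l=1..k. lm l *\<^sub>R V l) = (\<Sum>l=1..k. X (l - 1) - X l)"
    unfolding scaleR_sum_right by (rule sum.cong) (auto simp: hX)
  also have "\<dots> = X 0 - X k" by (rule telescope1v)
  finally show ?thesis .
qed

end

lemma powr32: "(x::real) \<ge> 0 \<Longrightarrow> x powr (3/2) = x * sqrt x"
proof (cases "x = 0")
  case False
  assume "x \<ge> 0"
  hence "x > 0" using False by simp
  have "x powr (3/2) = x powr (1 + 1/2)" by simp
  also have "\<dots> = x powr 1 * x powr (1/2)" by (rule powr_add)
  also have "\<dots> = x * sqrt x" using \<open>x > 0\<close> by (simp add: powr_half_sqrt)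
  finally show ?thesis .
qed simp

lemma sqdiff_ident:
  fixes p q r z :: "'a::real_inner"
  shows "(norm (p - q))\<^sup>2 - (norm (r - q))\<^sup>2 = (norm (p - z))\<^sup>2 - (norm (r - z))\<^sup>2 + 2 * inner (p - r) (z - q)"
  by (simp add: power2_norm_eq_inner inner_diff_left inner_diff_right inner_commute algebra_simps)

context hpe
begin

lemma alpha_pos: "l \<in> {1..k} \<Longrightarrow> norm (Y l - X (l - 1)) > 0"
proof (rule ccontr)
  assume l: "l \<in> {1..k}" and "\<not> norm (Y l - X (l - 1)) > 0"
  hence "norm (Y l - X (l - 1)) = 0" by simp
  with hA[OF l] eta show False by simp
qed

lemma lm_ge: "l \<in> {1..k} \<Longrightarrow> \<eta> / norm (Y l - X (l - 1)) \<le> lm l"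
  using hA[of l] alpha_pos[of l] by (simp add: pos_divide_le_eq)

lemma LA_pos: "(\<Sum>l=1..k. lm l) > 0"
  using k1 hL by (intro sum_pos) auto

lemma lam_bound:
  assumes hZ: "\<And>l. l \<in> {1..k} \<Longrightarrow> inner (V l) (Y l - z) \<ge> 0"
  shows "sqrt \<tau> * sqrt (1 - \<sigma>\<^sup>2) * \<eta> * (real k * sqrt (real k)) \<le> norm (X 0 - z) * (\<Sum>l=1..k. lm l)"
proof -
  define \<alpha> where "\<alpha> l = norm (Y l - X (l - 1))" for l
  define SA where "SA = (\<Sum>l=1..k. (\<alpha> l)\<^sup>2)"
  define S3 where "S3 = (\<Sum>l=1..k. 1 / \<alpha> l)"
  define LA where "LA = (\<Sum>l=1..k. lm l)"
  define D where "D = norm (X 0 - z)"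
  have ap: "\<And>l. l \<in> {1..k} \<Longrightarrow> \<alpha> l > 0" unfolding \<alpha>_def by (rule alpha_pos)
  have c1: "(real k)^3 \<le> SA * S3\<^sup>2" unfolding SA_def S3_def by (rule inv_sum_bound) (rule ap)
  have "\<eta> * S3 = (\<Sum>l=1..k. \<eta> / \<alpha> l)" by (simp add: S3_def sum_distrib_left)
  also have "\<dots> \<le> LA" unfolding LA_def \<alpha>_def by (rule sum_mono) (rule lm_ge)
  finally have c2: "\<eta> * S3 \<le> LA" .
  have S3p: "S3 \<ge> 0" unfolding S3_def using ap by (intro sum_nonneg) (simp add: less_imp_le)
  have SAp: "SA \<ge> 0" unfolding SA_def by (intro sum_nonneg) simp
  have c3: "(1 - \<sigma>\<^sup>2) * \<tau> * SA \<le> D\<^sup>2" unfolding SA_def D_def \<alpha>_def by (rule sumA[OF hZ])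
  have s1: "1 - \<sigma>\<^sup>2 \<ge> 0" using sig by (simp add: power_le_one)
  have q1: "(sqrt \<tau>)\<^sup>2 = \<tau>" using tau by simp
  have q2: "(sqrt (1 - \<sigma>\<^sup>2))\<^sup>2 = 1 - \<sigma>\<^sup>2" using s1 by simp
  have q3: "(sqrt (real k))\<^sup>2 = real k" by simp
  have "(sqrt \<tau> * sqrt (1 - \<sigma>\<^sup>2) * \<eta> * (real k * sqrt (real k)))\<^sup>2
      = (sqrt \<tau>)\<^sup>2 * (sqrt (1 - \<sigma>\<^sup>2))\<^sup>2 * \<eta>\<^sup>2 * ((real k)\<^sup>2 * (sqrt (real k))\<^sup>2)"
    by (simp only: power_mult_distrib)
  also have "\<dots> = \<tau> * (1 - \<sigma>\<^sup>2) * \<eta>\<^sup>2 * (real k)^3"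
    unfolding q1 q2 q3 by (simp add: power3_eq_cube power2_eq_square)
  also have "\<dots> \<le> \<tau> * (1 - \<sigma>\<^sup>2) * \<eta>\<^sup>2 * (SA * S3\<^sup>2)"
    using c1 tau s1 by (intro mult_left_mono) auto
  also have "\<dots> = ((1 - \<sigma>\<^sup>2) * \<tau> * SA) * (\<eta> * S3)\<^sup>2" by (simp add: power_mult_distrib algebra_simps)
  also have "\<dots> \<le> D\<^sup>2 * LA\<^sup>2"
    using c3 c2 S3p eta by (intro mult_mono power_mono) auto
  also have "\<dots> = (D * LA)\<^sup>2" by (simp add: power_mult_distrib)
  finally have "(sqrt \<tau> * sqrt (1 - \<sigma>\<^sup>2) * \<eta> * (real k * sqrt (real k)))\<^sup>2 \<le> (D * LA)\<^sup>2" .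
  moreover have "D * LA \<ge> 0" using LA_pos by (simp add: D_def LA_def)
  ultimately show ?thesis unfolding D_def LA_def by (rule power2_le_imp_le)
qed

lemma Y_dist:
  assumes hZ: "\<And>l. l \<in> {1..k} \<Longrightarrow> inner (V l) (Y l - z) \<ge> 0" and l: "l \<in> {1..k}"
  shows "sqrt (1 - \<sigma>\<^sup>2) * norm (Y l - z) \<le> norm (X 0 - z)"
proof -
  have "(1 - \<sigma>\<^sup>2) * (norm (Y l - z))\<^sup>2 \<le> (norm (X (l - 1) - z))\<^sup>2"
    by (rule y_dist[OF hE[OF l] hL[OF l] hZ[OF l] sig(1)])
  also have "\<dots> \<le> (norm (X 0 - z))\<^sup>2" using fejer0[OF hZ, of "l - 1"] l by (intro power_mono) auto
  finally have "(sqrt (1 - \<sigma>\<^sup>2) * norm (Y l - z))\<^sup>2 \<le> (norm (X 0 - z))\<^sup>2"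
    using sig by (simp add: power_mult_distrib power_le_one)
  thus ?thesis by (rule power2_le_imp_le) simp
qed

end

context hpe
begin

lemma bound_a:
  assumes hZ: "\<And>l. l \<in> {1..k} \<Longrightarrow> inner (V l) (Y l - z) \<ge> 0"
  shows "\<exists>j\<in>{1..k}. norm (V j) \<le> (norm (X 0 - z))\<^sup>2 / (\<tau> * \<eta> * (1 - \<sigma>) * real k)"
proof (rule ccontr)
  define D where "D = norm (X 0 - z)"
  define \<alpha> where "\<alpha> l = norm (Y l - X (l - 1))" for l
  define B where "B = D\<^sup>2 / (\<tau> * \<eta> * (1 - \<sigma>) * real k)"
  define c where "c = D\<^sup>2 / (\<tau> * (1 - \<sigma>\<^sup>2) * real k)"
  assume "\<not> (\<exists>j\<in>{1..k}. norm (V j) \<le> (norm (X 0 - z))\<^sup>2 / (\<tau> * \<eta> * (1 - \<sigma>) * real k))"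
  hence gt: "\<And>j. j \<in> {1..k} \<Longrightarrow> norm (V j) > B" by (auto simp: B_def D_def not_le)
  have kp: "real k > 0" using k1 by simp
  have s1: "1 - \<sigma> > 0" "1 + \<sigma> > 0" using sig by auto
  have s2: "1 - \<sigma>\<^sup>2 = (1 - \<sigma>) * (1 + \<sigma>)" by (simp add: power2_eq_square algebra_simps)
  have Vb: "norm (V j) * \<eta> \<le> (1 + \<sigma>) * (\<alpha> j)\<^sup>2" if j: "j \<in> {1..k}" for j
  proof -
    have "lm j * norm (V j) = norm (lm j *\<^sub>R V j)" using hL[OF j] by simp
    also have "\<dots> \<le> norm (lm j *\<^sub>R V j + Y j - X (j - 1)) + norm (Y j - X (j - 1))"
      by (metis add_diff_cancel_right' add_diff_eq norm_triangle_ineq4 diff_add_cancel norm_minus_commute norm_triangle_sub)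
    also have "\<dots> \<le> (1 + \<sigma>) * \<alpha> j" using hE[OF j] by (simp add: \<alpha>_def algebra_simps)
    finally have a: "lm j * norm (V j) \<le> (1 + \<sigma>) * \<alpha> j" .
    have "norm (V j) * \<eta> \<le> norm (V j) * (lm j * \<alpha> j)" using hA[OF j] by (intro mult_left_mono) (auto simp: \<alpha>_def)
    also have "\<dots> = (lm j * norm (V j)) * \<alpha> j" by simp
    also have "\<dots> \<le> ((1 + \<sigma>) * \<alpha> j) * \<alpha> j" using a by (intro mult_right_mono) (auto simp: \<alpha>_def)
    finally show ?thesis by (simp add: power2_eq_square algebra_simps)
  qed
  have ca: "c < (\<alpha> j)\<^sup>2" if j: "j \<in> {1..k}" for j
  proof -
    have "B * \<eta> < norm (V j) * \<eta>" using gt[OF j] eta by simp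
    also have "\<dots> \<le> (1 + \<sigma>) * (\<alpha> j)\<^sup>2" by (rule Vb[OF j])
    finally have "B * \<eta> < (1 + \<sigma>) * (\<alpha> j)\<^sup>2" .
    moreover have "B * \<eta> = (1 + \<sigma>) * c"
    proof -
      have aux: "(D\<^sup>2 / (t * e * a * q)) * e = b * (D\<^sup>2 / (t * (a * b) * q))"
        if "t \<noteq> 0" "e \<noteq> 0" "a \<noteq> 0" "b \<noteq> 0" "q \<noteq> 0" for t e a b q :: real
        using that by (simp add: field_simps)
      show ?thesis unfolding B_def c_def s2 by (rule aux) (use eta tau kp s1 in auto)
    qed
    ultimately show ?thesis using s1 by simp
  qed
  have "real k * c = (\<Sum>l=1..k. c)" by simp
  also have "\<dots> < (\<Sum>l=1..k. (\<alpha> l)\<^sup>2)" using k1 by (intro sum_strict_mono ca) auto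
  finally have "real k * c < (\<Sum>l=1..k. (\<alpha> l)\<^sup>2)" .
  hence "(1 - \<sigma>\<^sup>2) * \<tau> * (real k * c) < (1 - \<sigma>\<^sup>2) * \<tau> * (\<Sum>l=1..k. (\<alpha> l)\<^sup>2)"
    using s1 tau unfolding s2 by (intro mult_strict_left_mono) auto
  also have "\<dots> \<le> D\<^sup>2" unfolding D_def \<alpha>_def by (rule sumA[OF hZ])
  also have "D\<^sup>2 = (1 - \<sigma>\<^sup>2) * \<tau> * (real k * c)"
  proof -
    have aux: "D\<^sup>2 = (a * b) * t * (q * (D\<^sup>2 / (t * (a * b) * q)))"
      if "t \<noteq> 0" "a \<noteq> 0" "b \<noteq> 0" "q \<noteq> 0" for t a b q :: real
      using that by (simp add: field_simps)
    show ?thesis unfolding c_def s2 by (rule aux) (use tau kp s1 in auto)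
  qed
  finally show False by simp
qed

lemma bound_v:
  assumes hZ: "\<And>l. l \<in> {1..k} \<Longrightarrow> inner (V l) (Y l - z) \<ge> 0"
  shows "norm ((1 / (\<Sum>l=1..k. lm l)) *\<^sub>R (\<Sum>l=1..k. lm l *\<^sub>R V l))
     \<le> 2 * (norm (X 0 - z))\<^sup>2 / (\<tau> powr (3/2) * \<eta> * sqrt (1 - \<sigma>\<^sup>2) * real k powr (3/2))"
proof -
  define D where "D = norm (X 0 - z)"
  define LA where "LA = (\<Sum>l=1..k. lm l)"
  define M where "M = sqrt \<tau> * sqrt (1 - \<sigma>\<^sup>2) * \<eta> * (real k * sqrt (real k))"
  have LA0: "LA > 0" unfolding LA_def by (rule LA_pos)
  have s1: "1 - \<sigma>\<^sup>2 > 0" using sig mult_left_le[of \<sigma> \<sigma>] by (simp add: power2_eq_square)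
  have M0: "M > 0" unfolding M_def using tau s1 eta k1 by simp
  have MD: "M \<le> D * LA" unfolding M_def D_def LA_def by (rule lam_bound[OF hZ])
  have "D * LA > 0" using M0 MD by linarith
  hence D0: "D > 0" using LA0 by (simp add: zero_less_mult_iff)
  have "(\<Sum>l=1..k. lm l *\<^sub>R V l) = (1 / \<tau>) *\<^sub>R (\<tau> *\<^sub>R (\<Sum>l=1..k. lm l *\<^sub>R V l))" using tau by simp
  also have "\<dots> = (1 / \<tau>) *\<^sub>R (X 0 - X k)" by (simp only: sumV)
  finally have "norm ((1 / LA) *\<^sub>R (\<Sum>l=1..k. lm l *\<^sub>R V l)) = norm (X 0 - X k) / (\<tau> * LA)"
    using tau LA0 by simp
  also have "\<dots> \<le> 2 * D / (\<tau> * LA)"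
  proof (rule divide_right_mono)
    have "norm (X 0 - X k) \<le> norm (X 0 - z) + norm (X k - z)" using norm_triangle_ineq4[of "X 0 - z" "X k - z"] by simp
    also have "\<dots> \<le> 2 * D" using fejer0[OF hZ, of k] by (simp add: D_def)
    finally show "norm (X 0 - X k) \<le> 2 * D" .
  qed (use tau LA0 in simp)
  also have "\<dots> = 2 * D\<^sup>2 / (\<tau> * (D * LA))" using D0 by (simp add: power2_eq_square)
  also have "\<dots> \<le> 2 * D\<^sup>2 / (\<tau> * M)" using M0 MD tau D0 LA0 by (intro divide_left_mono mult_left_mono mult_pos_pos) auto
  also have "\<tau> * M = \<tau> powr (3/2) * \<eta> * sqrt (1 - \<sigma>\<^sup>2) * real k powr (3/2)"
    using tau by (simp add: M_def powr32)
  finally show ?thesis by (simp add: D_def LA_def)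
qed

end

lemma aux_q:
  fixes D Dk Ds I :: real
  assumes "0 \<le> Dk" "Dk \<le> D" "D \<le> Ds" "I \<le> (D + Dk) * Ds"
  shows "D\<^sup>2 - Dk\<^sup>2 + 2 * I \<le> 4 * D * Ds"
proof -
  have p: "0 \<le> (D - Dk) * (2 * Ds - D - Dk)" using assms by (intro mult_nonneg_nonneg) auto
  have e: "(D - Dk) * (2 * Ds - D - Dk) = 4 * D * Ds - (D\<^sup>2 - Dk\<^sup>2 + 2 * ((D + Dk) * Ds))"
    by (simp add: power2_eq_square algebra_simps)
  show ?thesis using p e assms(4) by linarith
qed

lemma enl_lemma:
  fixes Y V :: "nat \<Rightarrow> 'a::real_inner" and c :: "nat \<Rightarrow> real"
  assumes LA: "LA = (\<Sum>l\<in>I. c l)" and LA0: "LA > 0"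
    and ya: "ya = (1 / LA) *\<^sub>R (\<Sum>l\<in>I. c l *\<^sub>R Y l)" and va: "va = (1 / LA) *\<^sub>R (\<Sum>l\<in>I. c l *\<^sub>R V l)"
    and eps: "eps = (1 / LA) * (\<Sum>l\<in>I. c l * inner (Y l - ya) (V l - va))"
    and c0: "\<And>l. l \<in> I \<Longrightarrow> c l \<ge> 0"
    and mono: "\<And>l. l \<in> I \<Longrightarrow> inner (Y l - z) (V l - u) \<ge> 0"
  shows "inner (va - u) (ya - z) \<ge> - eps"
proof -
  have "(\<Sum>l\<in>I. c l * inner (Y l - z) (V l - u)) = (\<Sum>l\<in>I. c l * inner (Y l - ya) (V l - va)) + LA * inner (ya - z) (va - u)"
    by (rule erg_identity[OF LA _ ya va]) (use LA0 in simp)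
  also have "(\<Sum>l\<in>I. c l * inner (Y l - ya) (V l - va)) = LA * eps" using LA0 by (simp add: eps)
  finally have e: "(\<Sum>l\<in>I. c l * inner (Y l - z) (V l - u)) = LA * (eps + inner (ya - z) (va - u))"
    by (simp add: algebra_simps)
  have "(\<Sum>l\<in>I. c l * inner (Y l - z) (V l - u)) \<ge> 0" using c0 mono by (intro sum_nonneg mult_nonneg_nonneg) auto
  hence "LA * (eps + inner (ya - z) (va - u)) \<ge> 0" using e by simp
  hence "eps + inner (ya - z) (va - u) \<ge> 0" using LA0 by (simp add: zero_le_mult_iff)
  thus ?thesis by (simp add: inner_commute)
qed

context hpe
begin

lemma bound_eps:
  assumes hZ: "\<And>l. l \<in> {1..k} \<Longrightarrow> inner (V l) (Y l - z) \<ge> 0"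
    and LA: "LA = (\<Sum>l=1..k. lm l)"
    and ya: "ya = (1 / LA) *\<^sub>R (\<Sum>l=1..k. lm l *\<^sub>R Y l)" and va: "va = (1 / LA) *\<^sub>R (\<Sum>l=1..k. lm l *\<^sub>R V l)"
    and eps: "eps = (1 / LA) * (\<Sum>l=1..k. lm l * inner (Y l - ya) (V l - va))"
  shows "eps \<le> 2 * norm (X 0 - z) ^ 3 / (\<tau> powr (3/2) * \<eta> * (1 - \<sigma>\<^sup>2) * real k powr (3/2))"
proof -
  define D where "D = norm (X 0 - z)"
  define Dk where "Dk = norm (X k - z)"
  define s where "s = sqrt (1 - \<sigma>\<^sup>2)"
  define M where "M = sqrt \<tau> * sqrt (1 - \<sigma>\<^sup>2) * \<eta> * (real k * sqrt (real k))"
  have LA0: "LA > 0" unfolding LA by (rule LA_pos)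
  have s1: "1 - \<sigma>\<^sup>2 > 0" using sig mult_left_le[of \<sigma> \<sigma>] by (simp add: power2_eq_square)
  have s0: "s > 0" using s1 by (simp add: s_def)
  have sle: "s \<le> 1" using sig by (simp add: s_def)
  have M0: "M > 0" unfolding M_def using tau s1 eta k1 by simp
  have MD: "M \<le> D * LA" unfolding M_def D_def LA by (rule lam_bound[OF hZ])
  have "D * LA > 0" using M0 MD by linarith
  hence D0: "D > 0" using LA0 by (simp add: zero_less_mult_iff)
  have "(\<Sum>l=1..k. lm l * inner (Y l - ya) (V l - 0)) = (\<Sum>l=1..k. lm l * inner (Y l - ya) (V l - va)) + LA * inner (ya - ya) (va - 0)"
    by (rule erg_identity[OF LA _ ya va]) (use LA0 in simp)
  hence e1: "LA * eps = (\<Sum>l=1..k. lm l * inner (Y l - ya) (V l))" using LA0 by (simp add: eps)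
  have e2: "(\<Sum>l=1..k. lm l * inner (Y l - ya) (V l)) \<le> ((norm (X 0 - ya))\<^sup>2 - (norm (X k - ya))\<^sup>2) / (2 * \<tau>)"
    by (rule sumW)
  have e3: "(norm (X 0 - ya))\<^sup>2 - (norm (X k - ya))\<^sup>2 = D\<^sup>2 - Dk\<^sup>2 + 2 * inner (X 0 - X k) (z - ya)"
    unfolding D_def Dk_def by (rule sqdiff_ident)
  have Yb: "norm (Y l - z) \<le> D / s" if l: "l \<in> {1..k}" for l
    using Y_dist[OF hZ l] s0 by (simp add: D_def s_def pos_le_divide_eq mult.commute)
  have yaz: "ya - z = (1 / LA) *\<^sub>R (\<Sum>l=1..k. lm l *\<^sub>R (Y l - z))"
  proof -
    have "(\<Sum>l=1..k. lm l *\<^sub>R (Y l - z)) = (\<Sum>l=1..k. lm l *\<^sub>R Y l) - LA *\<^sub>R z"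
      by (simp add: LA scaleR_diff_right sum_subtractf scaleR_sum_left)
    thus ?thesis using LA0 by (simp add: ya scaleR_diff_right)
  qed
  have "norm (ya - z) = (1 / LA) * norm (\<Sum>l=1..k. lm l *\<^sub>R (Y l - z))"
    unfolding yaz using LA0 by simp
  also have "\<dots> \<le> (1 / LA) * (\<Sum>l=1..k. norm (lm l *\<^sub>R (Y l - z)))"
    using LA0 by (intro mult_left_mono norm_sum) auto
  also have "\<dots> \<le> (1 / LA) * (\<Sum>l=1..k. lm l * (D / s))"
  proof (intro mult_left_mono sum_mono)
    fix l assume l: "l \<in> {1..k}"
    have "norm (lm l *\<^sub>R (Y l - z)) = lm l * norm (Y l - z)" using hL[OF l] by simp
    also have "\<dots> \<le> lm l * (D / s)" using hL[OF l] Yb[OF l] by (intro mult_left_mono) auto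
    finally show "norm (lm l *\<^sub>R (Y l - z)) \<le> lm l * (D / s)" .
  qed (use LA0 in simp)
  also have "\<dots> = D / s"
  proof -
    have "(\<Sum>l=1..k. lm l * (D / s)) = LA * (D / s)" unfolding LA by (rule sum_distrib_right[symmetric])
    thus ?thesis using LA0 by simp
  qed
  finally have yzb: "norm (z - ya) \<le> D / s" by (simp add: norm_minus_commute)
  have "inner (X 0 - X k) (z - ya) \<le> norm (X 0 - X k) * norm (z - ya)" by (rule norm_cauchy_schwarz)
  also have "\<dots> \<le> (D + Dk) * (D / s)"
  proof (rule mult_mono)
    show "norm (X 0 - X k) \<le> D + Dk" using norm_triangle_ineq4[of "X 0 - z" "X k - z"] by (simp add: D_def Dk_def)
  qed (use yzb D0 in \<open>auto simp: Dk_def\<close>)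
  finally have ib: "inner (X 0 - X k) (z - ya) \<le> (D + Dk) * (D / s)" .
  have Dks: "Dk \<le> D" using fejer0[OF hZ, of k] by (simp add: D_def Dk_def)
  have Dss: "D \<le> D / s" using s0 sle D0 by (simp add: le_divide_eq)
  have h4: "D\<^sup>2 - Dk\<^sup>2 + 2 * inner (X 0 - X k) (z - ya) \<le> 4 * D * (D / s)"
    by (rule aux_q[OF _ Dks Dss ib]) (simp add: Dk_def)
  have "LA * eps \<le> (D\<^sup>2 - Dk\<^sup>2 + 2 * inner (X 0 - X k) (z - ya)) / (2 * \<tau>)"
    using e1 e2 unfolding e3 by simp
  also have "\<dots> \<le> 4 * D * (D / s) / (2 * \<tau>)" using h4 tau by (intro divide_right_mono) auto
  also have "\<dots> = 2 * D\<^sup>2 / (\<tau> * s)" using tau s0 by (simp add: power2_eq_square field_simps)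
  finally have hh: "LA * eps \<le> 2 * D\<^sup>2 / (\<tau> * s)" .
  have "eps \<le> 2 * D\<^sup>2 / (\<tau> * s) / LA" unfolding pos_le_divide_eq[OF LA0] using hh by (simp add: mult.commute)
  also have "\<dots> = 2 * D ^ 3 / (\<tau> * s * (D * LA))" using D0 LA0 by (simp add: power2_eq_square power3_eq_cube)
  also have "\<dots> \<le> 2 * D ^ 3 / (\<tau> * s * M)" using M0 MD tau s0 D0 LA0 by (intro divide_left_mono mult_left_mono mult_pos_pos) auto
  also have "\<tau> * s * M = \<tau> powr (3/2) * \<eta> * (1 - \<sigma>\<^sup>2) * real k powr (3/2)"
  proof -
    have q: "s * sqrt (1 - \<sigma>\<^sup>2) = 1 - \<sigma>\<^sup>2" using s1 by (simp add: s_def)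
    have "\<tau> * s * M = (\<tau> * sqrt \<tau>) * \<eta> * (s * sqrt (1 - \<sigma>\<^sup>2)) * (real k * sqrt (real k))"
      by (simp add: M_def mult_ac)
    also have "\<dots> = \<tau> powr (3/2) * \<eta> * (1 - \<sigma>\<^sup>2) * real k powr (3/2)"
      unfolding q using tau by (simp add: powr32)
    finally show ?thesis .
  qed
  finally show ?thesis by (simp add: D_def)
qed

end

lemma transfer_infdist:
  fixes x0 :: "'a::real_normed_vector"
  assumes S: "S \<noteq> {}" and c: "c \<ge> 0" and h: "\<And>z. z \<in> S \<Longrightarrow> Q \<le> c * (norm (x0 - z))^p"
  shows "Q \<le> c * (infdist x0 S)^p"
proof (rule ccontr)
  define m where "m = infdist x0 S"
  assume "\<not> ?thesis"
  hence lt: "c * m^p < Q" by (simp add: m_def)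
  have "(\<lambda>n. c * (m + inverse (real (Suc n)))^p) \<longlonglongrightarrow> c * (m + 0)^p"
    by (intro tendsto_intros LIMSEQ_inverse_real_of_nat)
  hence "eventually (\<lambda>n. c * (m + inverse (real (Suc n)))^p < Q) sequentially"
    using lt by (intro order_tendstoD(2)) auto
  then obtain N where N: "c * (m + inverse (real (Suc N)))^p < Q" by (auto simp: eventually_sequentially)
  define e where "e = inverse (real (Suc N))"
  have e0: "e > 0" by (simp add: e_def)
  have "(INF a\<in>S. dist x0 a) < m + e" using e0 S by (simp add: m_def infdist_notempty)
  moreover have "bdd_below ((\<lambda>a. dist x0 a) ` S)" by (rule bdd_belowI[of _ 0]) auto
  ultimately obtain z where z: "z \<in> S" "dist x0 z < m + e" using cINF_less_iff[OF S] by blast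
  have "Q \<le> c * (norm (x0 - z))^p" by (rule h[OF z(1)])
  also have "\<dots> \<le> c * (m + e)^p" using z(2) c by (intro mult_left_mono power_mono) (auto simp: dist_norm)
  also have "\<dots> < Q" using N by (simp add: e_def)
  finally show False by simp
qed

lemma enum_props:
  fixes A :: "nat set"
  assumes k: "k \<in> idxK A" and A0: "0 \<notin> A" and l: "l \<in> {1..k}"
  shows "idx_i A l \<in> A" "idx_i A (l - 1) < idx_i A l" "\<And>m. idx_i A (l - 1) < m \<Longrightarrow> m < idx_i A l \<Longrightarrow> m \<notin> A"
proof -
  have kk: "infinite A \<or> k \<le> card A" using k by (simp add: idxK_def)
  have l1: "l \<ge> 1" "l \<le> k" using l by auto
  have il: "idx_i A l = enumerate A (l - 1)" using l1 by (simp add: idx_i_def)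
  show inA: "idx_i A l \<in> A"
  proof (cases "finite A")
    case True
    hence "l - 1 < card A" using kk l1 by auto
    thus ?thesis using True il finite_enumerate_in_set by metis
  next
    case False thus ?thesis using il enumerate_in_set by metis
  qed
  have "idx_i A (l - 1) < idx_i A l \<and> (\<forall>m. idx_i A (l - 1) < m \<longrightarrow> m < idx_i A l \<longrightarrow> m \<notin> A)"
  proof (cases "l = 1")
    case True
    have i0: "idx_i A (l - 1) = 0" using True by (simp add: idx_i_def)
    have e: "idx_i A l = (LEAST n. n \<in> A)" using True by (simp add: idx_i_def enumerate_0)
    have "0 < idx_i A l" using inA A0 by (metis gr0I)
    moreover have "m \<notin> A" if "m < idx_i A l" for m using that e not_less_Least by auto
    ultimately show ?thesis using i0 by auto
  next
    case False
    then obtain j where j: "l = Suc (Suc j)" using l1 by (metis Suc_diff_1 Suc_le_lessD less_Suc_eq_0_disj le_neq_implies_less not0_implies_Suc One_nat_def)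
    have i1: "idx_i A (l - 1) = enumerate A j" using j by (simp add: idx_i_def)
    have eq: "enumerate A (Suc j) = (LEAST s. s \<in> A \<and> enumerate A j < s)"
    proof (cases "finite A")
      case True
      hence "Suc j < card A" using kk l1 j by auto
      thus ?thesis using True finite_enumerate_Suc'' by blast
    next
      case False thus ?thesis using enumerate_Suc'' by blast
    qed
    have i2: "idx_i A l = (LEAST s. s \<in> A \<and> enumerate A j < s)" using j eq by (simp add: idx_i_def)
    have ex: "\<exists>s. s \<in> A \<and> enumerate A j < s"
    proof (cases "finite A")
      case True
      hence "Suc j < card A" using kk l1 j by auto
      thus ?thesis using True finite_enumerate_in_set finite_enumerate_step by blast
    next
      case False thus ?thesis using enumerate_in_set enumerate_step by blast
    qed
    have "idx_i A l \<in> A \<and> enumerate A j < idx_i A l" unfolding i2 using ex by (rule LeastI_ex)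
    moreover have "m \<notin> A" if "enumerate A j < m" "m < idx_i A l" for m
      using that not_less_Least[of m "\<lambda>s. s \<in> A \<and> enumerate A j < s"] i2 by auto
    ultimately show ?thesis using i1 by auto
  qed
  thus "idx_i A (l - 1) < idx_i A l" "\<And>m. idx_i A (l - 1) < m \<Longrightarrow> m < idx_i A l \<Longrightarrow> m \<notin> A" by auto
qed

lemma FN_mono:
  assumes F_mono: "\<forall>u\<in>C. \<forall>w\<in>C. inner (F u - F w) (u - w) \<ge> 0"
    and "u1 \<in> FN F C z1" "u2 \<in> FN F C z2"
  shows "inner (u1 - u2) (z1 - z2) \<ge> 0"
proof -
  obtain n1 n2 where n: "u1 = F z1 + n1" "n1 \<in> normal_cone C z1" "u2 = F z2 + n2" "n2 \<in> normal_cone C z2"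
    using assms(2,3) by (auto simp: FN_def)
  have C: "z1 \<in> C" "z2 \<in> C" using n normal_cone_mem by auto
  have "inner (u1 - u2) (z1 - z2) = inner (F z1 - F z2) (z1 - z2) + inner (n1 - n2) (z1 - z2)"
    by (simp add: n inner_diff_left inner_add_left algebra_simps)
  moreover have "inner (F z1 - F z2) (z1 - z2) \<ge> 0" using F_mono C by blast
  moreover have "inner (n1 - n2) (z1 - z2) \<ge> 0" using normal_cone_mono n by blast
  ultimately show ?thesis by simp
qed

context setting
begin

lemma A_nonzero: "0 \<notin> idxA x y lam \<eta>" by (simp add: idxA_def)

lemma notA_x: assumes "m \<ge> 1" "m \<notin> idxA x y lam \<eta>" shows "x m = x (m - 1)"
proof -
  have "\<not> (lam m * norm (y m - x (m - 1)) \<ge> \<eta>)" using assms by (simp add: idxA_def)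
  thus ?thesis using algk(2)[OF assms(1)] by simp
qed

lemma x_const: "p \<le> q \<Longrightarrow> (\<forall>m. p < m \<and> m \<le> q \<longrightarrow> m \<notin> idxA x y lam \<eta>) \<Longrightarrow> x q = x p"
proof (induction q)
  case 0 thus ?case by simp
next
  case (Suc q)
  show ?case
  proof (cases "p = Suc q")
    case True thus ?thesis by simp
  next
    case False
    hence pq: "p \<le> q" using Suc.prems by simp
    have "x (Suc q) = x q" using notA_x[of "Suc q"] Suc.prems pq by simp
    also have "\<dots> = x p" using Suc.IH[OF pq] Suc.prems by auto
    finally show ?thesis .
  qed
qed

lemma hpe_inst:
  assumes k: "k \<in> idxK (idxA x y lam \<eta>)"
  shows "hpe (\<lambda>l. x (idx_i (idxA x y lam \<eta>) l)) (\<lambda>l. y (idx_i (idxA x y lam \<eta>) l))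
     (\<lambda>l. F (y (idx_i (idxA x y lam \<eta>) l)) + \<nu> (idx_i (idxA x y lam \<eta>) l)) (\<lambda>l. lam (idx_i (idxA x y lam \<eta>) l)) k tt ss \<eta>"
proof -
  define A where "A = idxA x y lam \<eta>"
  define i where "i = idx_i A"
  have EP: "i l \<in> A" "i (l - 1) < i l" "\<And>m. i (l - 1) < m \<Longrightarrow> m < i l \<Longrightarrow> m \<notin> A" if "l \<in> {1..k}" for l
    using enum_props[OF k[folded A_def] _ that] A_nonzero by (auto simp: A_def i_def)
  have il1: "i l \<ge> 1" if "l \<in> {1..k}" for l using EP(1)[OF that] by (simp add: A_def idxA_def)
  have xs: "x (i l - 1) = x (i (l - 1))" if l: "l \<in> {1..k}" for l
  proof (rule x_const)
    show "i (l - 1) \<le> i l - 1" using EP(2)[OF l] by simp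
    show "\<forall>m. i (l - 1) < m \<and> m \<le> i l - 1 \<longrightarrow> m \<notin> idxA x y lam \<eta>"
      using EP(3)[OF l] il1[OF l] by (auto simp: A_def)
  qed
  have inA: "lam (i l) * norm (y (i l) - x (i (l - 1))) \<ge> \<eta>" if l: "l \<in> {1..k}" for l
    using EP(1)[OF l] xs[OF l] by (simp add: A_def idxA_def)
  show ?thesis unfolding A_def[symmetric] i_def[symmetric]
  proof
    fix l assume l: "l \<in> {1..k}"
    have "lam (i l) * norm (y (i l) - x (i l - 1)) \<ge> \<eta>" using inA[OF l] xs[OF l] by simp
    thus "x (i l) = x (i (l - 1)) - (tt * lam (i l)) *\<^sub>R (F (y (i l)) + \<nu> (i l))"
      using algk(2)[OF il1[OF l]] xs[OF l] by simp
    show "norm (lam (i l) *\<^sub>R (F (y (i l)) + \<nu> (i l)) + y (i l) - x (i (l - 1))) \<le> ss * norm (y (i l) - x (i (l - 1)))"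
      using hpe_A[OF il1[OF l]] inA[OF l] xs[OF l] by simp
    show "lam (i l) > 0" using inv_all[OF il1[OF l]] by simp
    show "lam (i l) * norm (y (i l) - x (i (l - 1))) \<ge> \<eta>" by (rule inA[OF l])
  next
    show "0 < tt" "tt < 1" "0 \<le> ss" "ss < 1" "\<eta> > 0" using tf by auto
    show "k \<ge> 1" using k by (simp add: idxK_def)
  qed
qed

lemma g_in_FN: "n \<ge> 1 \<Longrightarrow> F (y n) + \<nu> n \<in> FN F C (y n)"
  using E_all[of n] by (auto simp: FN_def)

lemma zero_in_FN: "z \<in> solution_set F C \<Longrightarrow> 0 \<in> FN F C z"
  by (simp add: solution_set_def)

lemma hZ_inst: "n \<ge> 1 \<Longrightarrow> z \<in> solution_set F C \<Longrightarrow> inner (F (y n) + \<nu> n) (y n - z) \<ge> 0"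
  using FN_mono[OF F_mono g_in_FN zero_in_FN] by force

end

context setting
begin

lemma main:
  fixes k :: nat
  defines "A \<equiv> idxA x y lam \<eta>" and "i \<equiv> idx_i (idxA x y lam \<eta>)"
    and "d0 \<equiv> infdist (x 0) (solution_set F C)" and "g \<equiv> (\<lambda>n. F (y n) + \<nu> n)"
  assumes k: "k \<in> idxK A" and sol: "solution_set F C \<noteq> {}"
  shows "(\<exists>j\<in>{1..k}. \<nu> (i j) \<in> normal_cone C (y (i j)) \<and>
              norm (F (y (i j)) + \<nu> (i j)) \<le> d0\<^sup>2 / (tt * \<eta> * (1 - ss) * real k))
         \<and> erg_avg lam i g k \<in> enlargement (FN F C) (erg_eps lam i y g k) (erg_avg lam i y k)
         \<and> norm (erg_avg lam i g k) \<le> 2 * d0\<^sup>2 / (tt powr (3/2) * \<eta> * sqrt (1 - ss\<^sup>2) * real k powr (3/2))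
         \<and> erg_eps lam i y g k \<le> 2 * d0 ^ 3 / (tt powr (3/2) * \<eta> * (1 - ss\<^sup>2) * real k powr (3/2))"
proof -
  interpret H: hpe "\<lambda>l. x (i l)" "\<lambda>l. y (i l)" "\<lambda>l. g (i l)" "\<lambda>l. lam (i l)" k tt ss \<eta>
    using hpe_inst[OF k[unfolded A_def]] by (simp add: i_def g_def)
  have k1: "k \<ge> 1" using H.k1 .
  have i0: "i 0 = 0" by (simp add: i_def idx_i_def)
  have EP: "i l \<in> A" if "l \<in> {1..k}" for l
    using enum_props(1)[OF k _ that] A_nonzero by (auto simp: A_def i_def)
  have il1: "i l \<ge> 1" if "l \<in> {1..k}" for l using EP[OF that] by (simp add: A_def idxA_def)
  have hZ: "inner (g (i l)) (y (i l) - z) \<ge> 0" if "z \<in> solution_set F C" "l \<in> {1..k}" for z l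
    using hZ_inst[OF il1[OF that(2)] that(1)] by (simp add: g_def)
  have tpos: "tt > 0" and e0: "\<eta> > 0" and s0: "ss \<ge> 0" and s1: "ss < 1" using tf by auto
  have kp: "real k > 0" using k1 by simp
  have ss2: "1 - ss\<^sup>2 > 0" using s0 s1 mult_left_le[of ss ss] by (simp add: power2_eq_square)
  define LA where "LA = erg_Lambda lam i k"
  have LA: "LA = (\<Sum>l=1..k. lam (i l))" by (simp add: LA_def erg_Lambda_def)
  have LA0: "LA > 0" unfolding LA by (rule H.LA_pos)
  have ya: "erg_avg lam i y k = (1 / LA) *\<^sub>R (\<Sum>l=1..k. lam (i l) *\<^sub>R y (i l))" by (simp add: erg_avg_def LA_def)
  have va: "erg_avg lam i g k = (1 / LA) *\<^sub>R (\<Sum>l=1..k. lam (i l) *\<^sub>R g (i l))" by (simp add: erg_avg_def LA_def)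
  have eps: "erg_eps lam i y g k = (1 / LA) * (\<Sum>l=1..k. lam (i l) * inner (y (i l) - erg_avg lam i y k) (g (i l) - erg_avg lam i g k))"
    by (simp add: erg_eps_def LA_def)
  define Q where "Q = Min ((\<lambda>j. norm (g (i j))) ` {1..k})"
  have fin: "finite ((\<lambda>j. norm (g (i j))) ` {1..k})" "(\<lambda>j. norm (g (i j))) ` {1..k} \<noteq> {}" using k1 by auto
  have Qz: "Q \<le> (1 / (tt * \<eta> * (1 - ss) * real k)) * (norm (x 0 - z))\<^sup>2" if z: "z \<in> solution_set F C" for z
  proof -
    obtain j where j: "j \<in> {1..k}" "norm (g (i j)) \<le> (norm (x (i 0) - z))\<^sup>2 / (tt * \<eta> * (1 - ss) * real k)"
      using H.bound_a[OF hZ[OF z]] by blast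
    have "Q \<le> norm (g (i j))" unfolding Q_def using fin j(1) by (intro Min_le) auto
    thus ?thesis using j(2) i0 by simp
  qed
  have Qd: "Q \<le> (1 / (tt * \<eta> * (1 - ss) * real k)) * d0\<^sup>2" unfolding d0_def
    by (rule transfer_infdist[OF sol _ Qz]) (use tpos e0 s1 kp in simp)
  obtain j where j: "j \<in> {1..k}" "norm (g (i j)) = Q"
    using Min_in[OF fin] unfolding Q_def by auto
  have partA: "\<exists>j\<in>{1..k}. \<nu> (i j) \<in> normal_cone C (y (i j)) \<and>
              norm (F (y (i j)) + \<nu> (i j)) \<le> d0\<^sup>2 / (tt * \<eta> * (1 - ss) * real k)"
  proof (intro bexI conjI)
    show "\<nu> (i j) \<in> normal_cone C (y (i j))" using E_all[OF il1[OF j(1)]] by simp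
    show "norm (F (y (i j)) + \<nu> (i j)) \<le> d0\<^sup>2 / (tt * \<eta> * (1 - ss) * real k)"
      using j(2) Qd by (simp add: g_def)
  qed (rule j(1))
  have partB: "erg_avg lam i g k \<in> enlargement (FN F C) (erg_eps lam i y g k) (erg_avg lam i y k)"
    unfolding enlargement_def
  proof (intro CollectI allI ballI)
    fix z u assume u: "u \<in> FN F C z"
    show "inner (erg_avg lam i g k - u) (erg_avg lam i y k - z) \<ge> - erg_eps lam i y g k"
    proof (rule enl_lemma[OF LA LA0 ya va eps])
      fix l assume l: "l \<in> {1..k}"
      show "lam (i l) \<ge> 0" using H.hL[OF l] by simp
      show "inner (y (i l) - z) (g (i l) - u) \<ge> 0"
        using FN_mono[OF F_mono g_in_FN[OF il1[OF l]] u] by (simp add: g_def inner_commute)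
    qed
  qed
  have Vz: "norm (erg_avg lam i g k) \<le> (2 / (tt powr (3/2) * \<eta> * sqrt (1 - ss\<^sup>2) * real k powr (3/2))) * (norm (x 0 - z))\<^sup>2"
    if z: "z \<in> solution_set F C" for z
    using H.bound_v[OF hZ[OF z]] i0 by (simp add: va LA)
  have partC: "norm (erg_avg lam i g k) \<le> 2 * d0\<^sup>2 / (tt powr (3/2) * \<eta> * sqrt (1 - ss\<^sup>2) * real k powr (3/2))"
  proof -
    have "norm (erg_avg lam i g k) \<le> (2 / (tt powr (3/2) * \<eta> * sqrt (1 - ss\<^sup>2) * real k powr (3/2))) * d0\<^sup>2"
      unfolding d0_def by (rule transfer_infdist[OF sol _ Vz]) (use tpos e0 ss2 kp in simp)
    thus ?thesis by simp
  qed
  have Ez: "erg_eps lam i y g k \<le> (2 / (tt powr (3/2) * \<eta> * (1 - ss\<^sup>2) * real k powr (3/2))) * (norm (x 0 - z)) ^ 3"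
    if z: "z \<in> solution_set F C" for z
    using H.bound_eps[OF hZ[OF z] LA ya va eps] i0 by simp
  have partD: "erg_eps lam i y g k \<le> 2 * d0 ^ 3 / (tt powr (3/2) * \<eta> * (1 - ss\<^sup>2) * real k powr (3/2))"
  proof -
    have "erg_eps lam i y g k \<le> (2 / (tt powr (3/2) * \<eta> * (1 - ss\<^sup>2) * real k powr (3/2))) * d0 ^ 3"
      unfolding d0_def by (rule transfer_infdist[OF sol _ Ez]) (use tpos e0 ss2 kp in simp)
    thus ?thesis by simp
  qed
  show ?thesis using partA partB partC partD by blast
qed

end

theorem corollary4p6:
  fixes F :: "'a::{real_inner, complete_space} \<Rightarrow> 'a"
    and F' :: "'a \<Rightarrow> 'a \<Rightarrow>\<^sub>L 'a"
    and C :: "'a set"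
    and L \<sigma>h \<theta> \<eta> :: real
    and x y \<nu> :: "nat \<Rightarrow> 'a"
    and lam :: "nat \<Rightarrow> real"
  assumes C_ne: "C \<noteq> {}" and C_closed: "closed C" and C_convex: "convex C"
    and F_mono: "\<forall>u\<in>C. \<forall>w\<in>C. inner (F u - F w) (u - w) \<ge> 0"
    and F_deriv: "\<forall>u\<in>C. (F has_derivative blinfun_apply (F' u)) (at u within C)"
    and F'_cont: "continuous_on C F'"
    and F'_lip: "\<forall>u\<in>C. \<forall>w\<in>C. norm (F' u - F' w) \<le> L * norm (u - w)"
    and L_pos: "L > 0"
    and sol_ne: "solution_set F C \<noteq> {}"
    and sh: "0 \<le> \<sigma>h" "\<sigma>h < 1/2"
    and th: "0 < \<theta>" "\<theta> < (1 - \<sigma>h) * (1 - 2 * \<sigma>h)"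
    and eta: "\<eta> > 2 * thetahat \<theta> \<sigma>h / L"
    and alg: "alg2 F F' C L \<sigma>h \<theta> \<eta> x y \<nu> lam"
  shows "let A = idxA x y lam \<eta>; i = idx_i A; \<tau> = tau \<theta> \<sigma>h \<eta> L;
           \<sigma> = 2 * thetahat \<theta> \<sigma>h / (\<eta> * L);
           d0 = infdist (x 0) (solution_set F C);
           g = (\<lambda>n. F (y n) + \<nu> n);
           ya = erg_avg lam i y; va = erg_avg lam i g; \<epsilon>a = erg_eps lam i y g
         in \<forall>k\<in>idxK A.
           (\<exists>j\<in>{1..k}. \<nu> (i j) \<in> normal_cone C (y (i j)) \<and>
              norm (F (y (i j)) + \<nu> (i j)) \<le> d0\<^sup>2 / (\<tau> * \<eta> * (1 - \<sigma>) * real k))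
         \<and> va k \<in> enlargement (FN F C) (\<epsilon>a k) (ya k)
         \<and> norm (va k) \<le> 2 * d0\<^sup>2 / (\<tau> powr (3/2) * \<eta> * sqrt (1 - \<sigma>\<^sup>2) * real k powr (3/2))
         \<and> \<epsilon>a k \<le> 2 * d0 ^ 3 / (\<tau> powr (3/2) * \<eta> * (1 - \<sigma>\<^sup>2) * real k powr (3/2))"
proof -
  interpret S: setting F F' C L \<sigma>h \<theta> \<eta> x y \<nu> lam
    using C_convex F_mono F_deriv F'_lip L_pos sh th eta alg by unfold_locales auto
  show ?thesis unfolding Let_def
  proof
    fix k assume k: "k \<in> idxK (idxA x y lam \<eta>)"
    show "(\<exists>j\<in>{1..k}. \<nu> (idx_i (idxA x y lam \<eta>) j) \<in> normal_cone C (y (idx_i (idxA x y lam \<eta>) j)) \<and>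
              norm (F (y (idx_i (idxA x y lam \<eta>) j)) + \<nu> (idx_i (idxA x y lam \<eta>) j))
                \<le> (infdist (x 0) (solution_set F C))\<^sup>2 / (tau \<theta> \<sigma>h \<eta> L * \<eta> * (1 - 2 * thetahat \<theta> \<sigma>h / (\<eta> * L)) * real k))
         \<and> erg_avg lam (idx_i (idxA x y lam \<eta>)) (\<lambda>n. F (y n) + \<nu> n) k \<in> enlargement (FN F C) (erg_eps lam (idx_i (idxA x y lam \<eta>)) y (\<lambda>n. F (y n) + \<nu> n) k) (erg_avg lam (idx_i (idxA x y lam \<eta>)) y k)
         \<and> norm (erg_avg lam (idx_i (idxA x y lam \<eta>)) (\<lambda>n. F (y n) + \<nu> n) k) \<le> 2 * (infdist (x 0) (solution_set F C))\<^sup>2 / (tau \<theta> \<sigma>h \<eta> L powr (3/2) * \<eta> * sqrt (1 - (2 * thetahat \<theta> \<sigma>h / (\<eta> * L))\<^sup>2) * real k powr (3/2))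
         \<and> erg_eps lam (idx_i (idxA x y lam \<eta>)) y (\<lambda>n. F (y n) + \<nu> n) k \<le> 2 * (infdist (x 0) (solution_set F C)) ^ 3 / (tau \<theta> \<sigma>h \<eta> L powr (3/2) * \<eta> * (1 - (2 * thetahat \<theta> \<sigma>h / (\<eta> * L))\<^sup>2) * real k powr (3/2))"
      by (rule S.main[OF k sol_ne])
  qed
qed

end
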